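(* Let $Q$ be a nonzero quadratic form on $\mathbb{F}_{q_1}/\mathbb{F}_q$ with rank $r_Q$. (1) The code $\mathcal{C}_{Q,N}$ is a $[\frac{(q^M-1)(q-1)}{N},\,m(m_2+1)]_p$ linear code. If $r_Q$ is even, its weight distribution is: weight $0$ (frequency $1$); $\frac{(p-1)(q-1)}{pN}q^M$ (frequency $q(q^{m_2}-1)$); $\frac{(p-1)(q-1)}{pN}q^M(1-\epsilon q^{-r_Q/2})$ (frequency $q-1$). If $r_Q$ is odd, its weight distribution is: weight $0$ (frequency $1$); $\frac{(p-1)(q-1)}{pN}q^M$ (frequency $q^{m_2+1}-1$). (2) The code $\mathcal{C}_{Q,N}'$ is a $[\frac{q^M(q-1)}{N},\,m(m_2+2)]_p$ linear code. If $r_Q$ is even, its weight distribution is: weight $0$ (frequency $1$); $\frac{p-1}{pN}q^{M+1}$ (frequency $q-1$); $\frac{(q-1)(p-1)}{pN}q^M$ (frequency $q^2(q^{m_2}-1)$); $\frac{(q-1)(p-1)}{pN}q^M(1-\epsilon q^{-r_Q/2})$ (frequency $q-1$); $\frac{p-1}{pN}q^M(q-1+\epsilon q^{-r_Q/2})$ (frequency $(q-1)^2$). If $r_Q$ is odd, its weight distribution is: weight $0$ (frequency $1$); $\frac{p-1}{pN}q^{M+1}$ (frequency $q-1$); $\frac{(q-1)(p-1)}{pN}q^M$ (frequency $q^2(q^{m_2}-1)+q-1$); $\frac{p-1}{pN}q^M(q-1-\epsilon q^{(1-r_Q)/2})$ (frequency $\frac12(q-1)^2$); $\frac{p-1}{pN}q^M(q-1+\epsilon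 q^{(1-r_Q)/2})$ (frequency $\frac12(q-1)^2$).
   Context: Let $p$ be an odd prime, $m\ge1$, $q=p^m$. Let $m_1,m_2$ be positive integers, $M=m_1+m_2$, $q_i=q^{m_i}$, $\mathbb{F}=\mathbb{F}_{q_1}\times\mathbb{F}_{q_2}$, $\mathbb{F}^\star=\mathbb{F}\setminus\{(0,0)\}$. $\mathrm{Tr}_{q^s/q}$ is the trace $\mathbb{F}_{q^s}\to\mathbb{F}_q$; $\eta$ is the quadratic character of $\mathbb{F}_q$ with $\eta(0)=0$. A quadratic form $Q$ on $\mathbb{F}_{q_1}/\mathbb{F}_q$ is a map $Q:\mathbb{F}_{q_1}\to\mathbb{F}_q$ with $Q(ax)=a^2Q(x)$ ($a\in\mathbb{F}_q$) such that $B_Q(x,y)=\frac12(Q(x+y)-Q(x)-Q(y))$ is $\mathbb{F}_q$-bilinear; rank $r_Q=m_1-\dim_{\mathbb{F}_q}\{x:B_Q(x,y)=0\ \forall y\}$; in suitable coordinates $Q=\sum_{i=1}^{r_Q}\lambda_ix_i^2$, $\lambda_i\in\mathbb{F}_q^*$, $\varepsilon_Q=\eta(\lambda_1\cdots\lambda_{r_Q})$. $\epsilon=\varepsilon_Q(-1)^{(p-1)mr_Q/4}$ if $r_Q$ even, $\epsilon=\varepsilon_Q(-1)^{(p-1)m(r_Q+1)/4}$ if $r_Q$ odd. Let $\mathcal{C}_Q=\{(aQ(x)+\mathrm{Tr}_{q_2/q}(by))_{(x,y)\in\mathbb{F}^\star}:(a,b)\in\mathbb{F}_q\times\mathbb{F}_{q_2}\}$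 (length $q^M-1$) and $\mathcal{C}_Q'=\{(aQ(x)+\mathrm{Tr}_{q_2/q}(by)+c)_{(x,y)\in\mathbb{F}}:(a,b,c)\in\mathbb{F}_q\times\mathbb{F}_{q_2}\times\mathbb{F}_q\}$ (length $q^M$). Let $N$ be a positive divisor of $p-1$ with $\gcd(N,\frac{q-1}{p-1})=1$, $\theta$ a primitive $\frac{q-1}{N}$-th root of unity in $\mathbb{F}_q$, and for $\gamma\in\mathbb{F}_q$ let $\psi_\gamma=(\mathrm{Tr}_{q/p}(\gamma\theta^i))_{0\le i<\frac{q-1}{N}}\in\mathbb{F}_p^{(q-1)/N}$. For a code $\mathcal{D}\in\{\mathcal{C}_Q,\mathcal{C}_Q'\}$ of length $n$, its descended code is $\{(\psi_{c_1},\dots,\psi_{c_n}):(c_1,\dots,c_n)\in\mathcal{D}\}\subseteq\mathbb{F}_p^{n(q-1)/N}$ (concatenation); these are denoted $\mathcal{C}_{Q,N}$ and $\mathcal{C}_{Q,N}'$ respectively. *)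

theory Defs
  imports Complex_Main "HOL-Computational_Algebra.Primes" "HOL-Library.Multiset" "HOL-Library.FuncSet"
begin

text \<open>All finite fields are realised as subfields of one ambient finite field of type 'f.
  GF s is the subfield of order s, i.e. the set of roots of X^s - X.\<close>

definition GF :: "nat \<Rightarrow> 'f::field set" where
  "GF s = {x. x ^ s = x}"

definition tr :: "nat \<Rightarrow> nat \<Rightarrow> 'f::field \<Rightarrow> 'f" where
  "tr q s x = (\<Sum>i<s. x ^ (q ^ i))"

definition eta :: "nat \<Rightarrow> 'f::field \<Rightarrow> int" where
  "eta q a = (if a = 0 then 0 else if (\<exists>b\<in>GF q. b ^ 2 = a) then 1 else -1)"

definition qf_bilin :: "('f::field \<Rightarrow> 'f) \<Rightarrow> 'f \<Rightarrow> 'f \<Rightarrow> 'f" where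
  "qf_bilin Q x y = (Q (x + y) - Q x - Q y) / 2"

definition is_quadratic_form :: "nat \<Rightarrow> nat \<Rightarrow> ('f::field \<Rightarrow> 'f) \<Rightarrow> bool" where
  "is_quadratic_form q m1 Q \<longleftrightarrow>
     (\<forall>x\<in>GF (q ^ m1). Q x \<in> GF q) \<and>
     (\<forall>a\<in>GF q. \<forall>x\<in>GF (q ^ m1). Q (a * x) = a ^ 2 * Q x) \<and>
     (\<forall>a\<in>GF q. \<forall>b\<in>GF q. \<forall>x\<in>GF (q ^ m1). \<forall>x'\<in>GF (q ^ m1). \<forall>y\<in>GF (q ^ m1).
        qf_bilin Q (a * x + b * x') y = a * qf_bilin Q x y + b * qf_bilin Q x' y \<and>
        qf_bilin Q y (a * x + b * x') = a * qf_bilin Q y x + b * qf_bilin Q y x')"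

definition qf_radical :: "nat \<Rightarrow> nat \<Rightarrow> ('f::field \<Rightarrow> 'f) \<Rightarrow> 'f set" where
  "qf_radical q m1 Q = {x\<in>GF (q ^ m1). \<forall>y\<in>GF (q ^ m1). qf_bilin Q x y = 0}"

text \<open>Rank: m1 minus the GF q-dimension of the radical (a GF q-subspace, whose dimension d
  is determined by its cardinality q^d).\<close>
definition qf_rank :: "nat \<Rightarrow> nat \<Rightarrow> ('f::field \<Rightarrow> 'f) \<Rightarrow> nat" where
  "qf_rank q m1 Q = m1 - (THE d. card (qf_radical q m1 Q) = q ^ d)"

definition qf_diagonal :: "nat \<Rightarrow> nat \<Rightarrow> ('f::field \<Rightarrow> 'f) \<Rightarrow> (nat \<Rightarrow> 'f) \<Rightarrow> (nat \<Rightarrow> 'f) \<Rightarrow> nat \<Rightarrow> bool" where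
  "qf_diagonal q m1 Q e lam r \<longleftrightarrow>
     bij_betw (\<lambda>x. \<Sum>i<m1. x i * e i) (PiE {..<m1} (\<lambda>_. GF q)) (GF (q ^ m1)) \<and>
     (\<forall>i<r. lam i \<in> GF q - {0}) \<and>
     (\<forall>x\<in>PiE {..<m1} (\<lambda>_. GF q). Q (\<Sum>i<m1. x i * e i) = (\<Sum>i<r. lam i * (x i) ^ 2))"

text \<open>psi_gamma = (Tr_{q/p}(gamma theta^i))_{0 <= i < (q-1)/N}; a descended codeword is indexed by
  pairs (position of the original code, i).\<close>
definition psi :: "nat \<Rightarrow> nat \<Rightarrow> nat \<Rightarrow> nat \<Rightarrow> 'f::field \<Rightarrow> 'f \<Rightarrow> nat \<Rightarrow> 'f" where
  "psi p m q N \<theta> \<gamma> i = (if i < (q - 1) div N then tr p m (\<gamma> * \<theta> ^ i) else 0)"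

definition pos_C :: "nat \<Rightarrow> nat \<Rightarrow> nat \<Rightarrow> nat \<Rightarrow> (('f::field \<times> 'f) \<times> nat) set" where
  "pos_C q m1 m2 N = ((GF (q ^ m1) \<times> GF (q ^ m2)) - {(0, 0)}) \<times> {..< (q - 1) div N}"

definition pos_C' :: "nat \<Rightarrow> nat \<Rightarrow> nat \<Rightarrow> nat \<Rightarrow> (('f::field \<times> 'f) \<times> nat) set" where
  "pos_C' q m1 m2 N = (GF (q ^ m1) \<times> GF (q ^ m2)) \<times> {..< (q - 1) div N}"

definition code_C :: "nat \<Rightarrow> nat \<Rightarrow> nat \<Rightarrow> nat \<Rightarrow> nat \<Rightarrow> nat \<Rightarrow> 'f::field \<Rightarrow> ('f \<Rightarrow> 'f)
    \<Rightarrow> ((('f \<times> 'f) \<times> nat) \<Rightarrow> 'f) set" where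
  "code_C p m q m1 m2 N \<theta> Q =
     (\<lambda>(a, b). \<lambda>((x, y), i). if ((x, y), i) \<in> pos_C q m1 m2 N
        then psi p m q N \<theta> (a * Q x + tr q m2 (b * y)) i else 0)
     ` (GF q \<times> GF (q ^ m2))"

definition code_C' :: "nat \<Rightarrow> nat \<Rightarrow> nat \<Rightarrow> nat \<Rightarrow> nat \<Rightarrow> nat \<Rightarrow> 'f::field \<Rightarrow> ('f \<Rightarrow> 'f)
    \<Rightarrow> ((('f \<times> 'f) \<times> nat) \<Rightarrow> 'f) set" where
  "code_C' p m q m1 m2 N \<theta> Q =
     (\<lambda>(a, b, c). \<lambda>((x, y), i). if ((x, y), i) \<in> pos_C' q m1 m2 N
        then psi p m q N \<theta> (a * Q x + tr q m2 (b * y) + c) i else 0)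
     ` (GF q \<times> GF (q ^ m2) \<times> GF q)"

definition linear_code :: "nat \<Rightarrow> 'j set \<Rightarrow> nat \<Rightarrow> nat \<Rightarrow> ('j \<Rightarrow> 'f::field) set \<Rightarrow> bool" where
  "linear_code p Pos n k C \<longleftrightarrow>
     finite Pos \<and> card Pos = n \<and>
     C \<subseteq> {c. (\<forall>j\<in>Pos. c j \<in> GF p) \<and> (\<forall>j. j \<notin> Pos \<longrightarrow> c j = 0)} \<and>
     (\<lambda>_. 0) \<in> C \<and>
     (\<forall>c\<in>C. \<forall>d\<in>C. (\<lambda>j. c j + d j) \<in> C) \<and>
     (\<forall>a\<in>GF p. \<forall>c\<in>C. (\<lambda>j. a * c j) \<in> C) \<and>
     card C = p ^ k"

definition hweight :: "'j set \<Rightarrow> ('j \<Rightarrow> 'f::zero) \<Rightarrow> nat" where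
  "hweight Pos c = card {j\<in>Pos. c j \<noteq> 0}"

definition weight_distr :: "'j set \<Rightarrow> ('j \<Rightarrow> 'f::zero) set \<Rightarrow> real multiset" where
  "weight_distr Pos C = image_mset (\<lambda>c. real (hweight Pos c)) (mset_set C)"

end

theory Submission
  imports Defs "HOL-Computational_Algebra.Polynomial" "HOL-Computational_Algebra.Primes"
begin


lemma fiber_count_gen:
  fixes T :: "'a \<Rightarrow> 'b"
  assumes fin: "finite G" and finS: "finite S" and sub: "T ` G \<subseteq> S"
    and fib: "\<And>y. y \<in> T ` G \<Longrightarrow> card {x\<in>G. T x = y} = c"
    and cardG: "card G = card S * K" and cK: "c \<le> K" and Gne: "G \<noteq> {}"
  shows "c = K \<and> T ` G = S"
proof -
  have "card G = (\<Sum>y\<in>T ` G. card {x\<in>G. T x = y})"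
    using sum.group[OF fin finite_imageI[OF fin] subset_refl, where g=T and h="\<lambda>_. 1::nat"] by simp
  also have "\<dots> = card (T ` G) * c" using fib by simp
  finally have e: "card G = card (T ` G) * c" .
  have le: "card (T ` G) \<le> card S" using card_mono[OF finS sub] .
  have pos: "card G > 0" using fin Gne by (simp add: card_gt_0_iff)
  have "c = K"
  proof (rule ccontr)
    assume "c \<noteq> K" then have "c < K" using cK by simp
    then have "card (T ` G) * c < card S * K"
    proof -
      have "card (T ` G) * c \<le> card S * c" using le by simp
      also have "\<dots> < card S * K" using \<open>c < K\<close> pos cardG by simp
      finally show ?thesis .
    qed
    then show False using e cardG by simp
  qed
  moreover have "card (T ` G) = card S"
  proof -
    have "c > 0" using pos e by (metis mult_is_0 neq0_conv)
    then show ?thesis using e cardG \<open>c = K\<close> by simp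
  qed
  then have "T ` G = S" using card_subset_eq[OF finS sub] by simp
  ultimately show ?thesis by simp
qed

lemma card_poly_roots_bound':
  fixes P :: "'a::{comm_ring_1,ring_no_zero_divisors} poly"
  assumes "P \<noteq> 0" "degree P \<le> d"
  shows "card {x. poly P x = 0} \<le> d"
  using card_poly_roots_bound[OF assms(1)] assms(2) by simp

locale ffield =
  fixes p L :: nat and TY :: "'f::{field,finite} itself"
  assumes p_prime: "prime p" and p_odd: "odd p"
    and cardF: "card (UNIV :: 'f set) = p ^ L"
begin

lemma of_nat_card_zero: "of_nat (card (UNIV :: 'f set)) = (0::'f)"
proof -
  have "(\<Sum>g\<in>(UNIV::'f set). g + 1) = (\<Sum>g\<in>UNIV. g)"
    by (rule sum.reindex_bij_witness[of _ "\<lambda>g. g - 1" "\<lambda>g. g + 1"]) auto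
  then show ?thesis by (simp add: sum.distrib)
qed

lemma L_pos: "L \<ge> 1"
proof (rule ccontr)
  assume "\<not> L \<ge> 1" then have "L = 0" by simp
  then have "card (UNIV :: 'f set) = 1" using cardF by simp
  then obtain a where "(UNIV :: 'f set) = {a}" by (meson card_1_singletonE)
  then have "(0::'f) = 1" by (metis UNIV_I singletonD)
  then show False by simp
qed

lemma CHAR_eq: "CHAR('f) = p"
proof -
  have pos: "CHAR('f) > 0" by (simp add: finite_imp_CHAR_pos)
  have pr: "prime CHAR('f)" using prime_CHAR_semidom[OF pos] .
  have "of_nat (p ^ L) = (0::'f)" using of_nat_card_zero cardF by simp
  then have "CHAR('f) dvd p ^ L" by (simp only: of_nat_eq_0_iff_char_dvd)
  then have "CHAR('f) dvd p" using pr prime_dvd_power by blast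
  then show ?thesis using pr p_prime primes_dvd_imp_eq by blast
qed

lemma of_nat_p: "of_nat p = (0::'f)"
  using CHAR_eq of_nat_CHAR by metis

lemma p_ge2: "p \<ge> 2" using p_prime prime_ge_2_nat by blast

lemma frob_add: "((x::'f) + y) ^ (p ^ k) = x ^ (p ^ k) + y ^ (p ^ k)"
  using freshmans_dream'[of "p ^ k" k x y] CHAR_eq p_prime by simp

lemma frob_sum: "(\<Sum>i\<in>A. (f i :: 'f)) ^ (p ^ k) = (\<Sum>i\<in>A. f i ^ (p ^ k))"
  using freshmans_dream_sum'[of "p ^ k" k f A] CHAR_eq p_prime by simp

lemma odd_ppow: "odd (p ^ k)" using p_odd by simp

lemma frob_uminus: "(- (x::'f)) ^ (p ^ k) = - (x ^ (p ^ k))"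
  using odd_ppow[of k] by (simp add: power_minus_odd)

lemma frob_diff: "((x::'f) - y) ^ (p ^ k) = x ^ (p ^ k) - y ^ (p ^ k)"
  using frob_add[of x "- y" k] frob_uminus[of y k] by simp

lemma pow_card: "(x::'f) ^ (p ^ L) = x"
proof (cases "x = 0")
  case True then show ?thesis using L_pos p_ge2 by simp
next
  case False
  have "x * (\<Prod>y\<in>UNIV-{0}. x * y) = x * x ^ (card (UNIV :: 'f set) - 1) * \<Prod>(UNIV-{0})"
    by (simp add: prod.distrib mult_ac)
  also have "x * x ^ (card (UNIV :: 'f set) - 1) = x ^ Suc (card (UNIV :: 'f set) - 1)"
    by (subst power_Suc) auto
  also have "Suc (card (UNIV :: 'f set) - 1) = card (UNIV :: 'f set)"
    using finite_UNIV_card_ge_0[where ?'a = 'f] by simp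
  also have "(\<Prod>y\<in>UNIV-{0}. x * y) = (\<Prod>y\<in>UNIV-{0}. y)"
    by (rule prod.reindex_bij_witness[of _ "\<lambda>y. y / x" "\<lambda>y. x * y"]) (use False in auto)
  finally show ?thesis using cardF by simp
qed

lemma GF_UNIV: "GF (p ^ L) = (UNIV :: 'f set)"
  unfolding GF_def using pow_card by auto

lemma GF_pow_iter: "(x::'f) \<in> GF (p ^ k) \<Longrightarrow> x ^ ((p ^ k) ^ j) = x"
  unfolding GF_def by (induction j) (simp_all add: power_mult)

lemma GF_sub: "GF (p ^ k) \<subseteq> (GF (p ^ (k * j)) :: 'f set)"
  using GF_pow_iter[of _ k j] unfolding GF_def by (auto simp: power_mult)

lemma GF_0[simp]: "(0::'f) \<in> GF (p ^ k)"
  unfolding GF_def using p_ge2 by simp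

lemma GF_1[simp]: "(1::'f) \<in> GF (p ^ k)"
  unfolding GF_def by simp

lemma GF_add: "x \<in> GF (p ^ k) \<Longrightarrow> y \<in> GF (p ^ k) \<Longrightarrow> (x::'f) + y \<in> GF (p ^ k)"
  unfolding GF_def by (simp add: frob_add)

lemma GF_uminus: "x \<in> GF (p ^ k) \<Longrightarrow> - (x::'f) \<in> GF (p ^ k)"
  unfolding GF_def by (simp add: frob_uminus)

lemma GF_diff: "x \<in> GF (p ^ k) \<Longrightarrow> y \<in> GF (p ^ k) \<Longrightarrow> (x::'f) - y \<in> GF (p ^ k)"
  unfolding GF_def by (simp add: frob_diff)

lemma GF_mult: "x \<in> GF n \<Longrightarrow> y \<in> GF n \<Longrightarrow> (x::'f) * y \<in> GF n"
  unfolding GF_def by (simp add: power_mult_distrib)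

lemma GF_inverse: "x \<in> GF n \<Longrightarrow> inverse (x::'f) \<in> GF n"
  unfolding GF_def by (simp add: power_inverse)

lemma GF_divide: "x \<in> GF n \<Longrightarrow> y \<in> GF n \<Longrightarrow> (x::'f) / y \<in> GF n"
  by (simp add: divide_inverse GF_mult GF_inverse)

lemma GF_power: "x \<in> GF n \<Longrightarrow> (x::'f) ^ j \<in> GF n"
proof -
  assume "x \<in> GF n"
  then have "x ^ n = x" by (simp add: GF_def)
  have "(x ^ j) ^ n = (x ^ n) ^ j" by (simp add: power_mult[symmetric] mult.commute)
  then show ?thesis using \<open>x ^ n = x\<close> by (simp add: GF_def)
qed

lemma GF_sum: "(\<And>i. i \<in> A \<Longrightarrow> f i \<in> GF (p ^ k)) \<Longrightarrow> (\<Sum>i\<in>A. (f i :: 'f)) \<in> GF (p ^ k)"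
  by (induction A rule: infinite_finite_induct) (auto intro: GF_add)

lemma GF_prod: "(\<And>i. i \<in> A \<Longrightarrow> f i \<in> GF n) \<Longrightarrow> (\<Prod>i\<in>A. (f i :: 'f)) \<in> GF n"
  by (induction A rule: infinite_finite_induct) (auto simp: GF_def power_mult_distrib)

lemma GF_of_nat: "(of_nat j :: 'f) \<in> GF (p ^ k)"
  by (induction j) (auto intro: GF_add)

lemma GF_finite[simp]: "finite (GF n :: 'f set)" by simp

lemma roots_xn_minus_x:
  assumes "n \<ge> 2"
  shows "card {x::'f. x ^ n = x} \<le> n"
proof -
  let ?P = "monom (1::'f) n - monom 1 1"
  have "coeff ?P n = 1" using assms by (simp add: coeff_monom)
  then have nz: "?P \<noteq> 0" by (metis coeff_0 zero_neq_one)
  have deg: "degree ?P \<le> n" using assms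
    by (intro degree_diff_le) (auto intro: order.trans[OF degree_monom_le])
  have "{x::'f. x ^ n = x} = {x. poly ?P x = 0}"
    by (auto simp: poly_monom)
  then show ?thesis using card_poly_roots_bound'[OF nz deg] by simp
qed

lemma roots_xn_minus_1:
  assumes "n \<ge> 1"
  shows "card {x::'f. x ^ n = 1} \<le> n"
proof -
  let ?P = "monom (1::'f) n - monom 1 0"
  have "coeff ?P n = 1" using assms by (simp add: coeff_monom)
  then have nz: "?P \<noteq> 0" by (metis coeff_0 zero_neq_one)
  have deg: "degree ?P \<le> n" using assms
    by (intro degree_diff_le) (auto intro: order.trans[OF degree_monom_le])
  have "{x::'f. x ^ n = 1} = {x. poly ?P x = 0}"
    by (auto simp: poly_monom)
  then show ?thesis using card_poly_roots_bound'[OF nz deg] by simp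
qed

lemma pk_ge2: "k \<ge> 1 \<Longrightarrow> p ^ k \<ge> 2"
proof -
  assume "k \<ge> 1"
  then have "p ^ 1 \<le> p ^ k" using p_ge2 by (intro power_increasing) auto
  then show ?thesis using p_ge2 by simp
qed

lemma GF_card_le:
  assumes "k \<ge> 1"
  shows "card (GF (p ^ k) :: 'f set) \<le> p ^ k"
  unfolding GF_def using roots_xn_minus_x[OF pk_ge2[OF assms]] .

end


definition addsub :: "'a::ab_group_add set \<Rightarrow> bool" where
  "addsub G \<longleftrightarrow> 0 \<in> G \<and> (\<forall>x\<in>G. \<forall>y\<in>G. x + y \<in> G) \<and> (\<forall>x\<in>G. - x \<in> G)"

lemma add_hom_fiber:
  fixes T :: "'a::ab_group_add \<Rightarrow> 'b::ab_group_add"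
  assumes G: "addsub G" and hom: "\<And>x y. x \<in> G \<Longrightarrow> y \<in> G \<Longrightarrow> T (x + y) = T x + T y"
    and y: "y \<in> T ` G"
  shows "card {x\<in>G. T x = y} = card {x\<in>G. T x = 0}"
proof -
  obtain x0 where x0: "x0 \<in> G" "y = T x0" using y by auto
  have "{x\<in>G. T x = y} = (\<lambda>z. x0 + z) ` {x\<in>G. T x = 0}"
  proof (intro equalityI subsetI)
    fix x assume "x \<in> {x\<in>G. T x = y}"
    then have x: "x \<in> G" "T x = y" by auto
    have z: "x - x0 \<in> G" using G x(1) x0(1) unfolding addsub_def by (metis diff_conv_add_uminus)
    have "T x = T x0 + T (x - x0)" using hom[OF x0(1) z] by simp
    then have "T (x - x0) = 0" using x x0 by simp
    then show "x \<in> (\<lambda>z. x0 + z) ` {x\<in>G. T x = 0}" using z by (intro image_eqI[of _ _ "x - x0"]) auto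
  next
    fix x assume "x \<in> (\<lambda>z. x0 + z) ` {x\<in>G. T x = 0}"
    then obtain z where z: "z \<in> G" "T z = 0" "x = x0 + z" by auto
    then show "x \<in> {x\<in>G. T x = y}" using G x0 hom[OF x0(1) z(1)] unfolding addsub_def by auto
  qed
  also have "card \<dots> = card {x\<in>G. T x = 0}" by (rule card_image) (simp add: inj_on_def)
  finally show ?thesis .
qed

lemma mult_hom_fiber:
  fixes T :: "'a::field \<Rightarrow> 'b::field"
  assumes G0: "0 \<notin> G" and Gm: "\<And>x y. x \<in> G \<Longrightarrow> y \<in> G \<Longrightarrow> x * y \<in> G"
    and Gi: "\<And>x. x \<in> G \<Longrightarrow> inverse x \<in> G"
    and hom: "\<And>x y. x \<in> G \<Longrightarrow> y \<in> G \<Longrightarrow> T (x * y) = T x * T y"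
    and y: "y \<in> T ` G" and Tnz: "\<And>x. x \<in> G \<Longrightarrow> T x \<noteq> 0"
  shows "card {x\<in>G. T x = y} = card {x\<in>G. T x = 1}"
proof -
  obtain x0 where x0: "x0 \<in> G" "y = T x0" using y by auto
  have x0nz: "x0 \<noteq> 0" using G0 x0 by auto
  have "{x\<in>G. T x = y} = (\<lambda>z. x0 * z) ` {x\<in>G. T x = 1}"
  proof (intro equalityI subsetI)
    fix x assume "x \<in> {x\<in>G. T x = y}"
    then have x: "x \<in> G" "T x = y" by auto
    have z: "x / x0 \<in> G" using Gm[OF x(1) Gi[OF x0(1)]] by (simp add: divide_inverse)
    have "T x = T x0 * T (x / x0)" using hom[OF x0(1) z] x0nz by simp
    then have "T (x / x0) = 1" using x x0 Tnz[OF x0(1)] by (metis mult_cancel_left1)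
    then show "x \<in> (\<lambda>z. x0 * z) ` {x\<in>G. T x = 1}" using z x0nz by (intro image_eqI[of _ _ "x / x0"]) auto
  next
    fix x assume "x \<in> (\<lambda>z. x0 * z) ` {x\<in>G. T x = 1}"
    then obtain z where z: "z \<in> G" "T z = 1" "x = x0 * z" by auto
    then show "x \<in> {x\<in>G. T x = y}" using Gm x0 hom[OF x0(1) z(1)] by auto
  qed
  also have "card \<dots> = card {x\<in>G. T x = 1}" by (rule card_image) (use x0nz in \<open>simp add: inj_on_def\<close>)
  finally show ?thesis .
qed

lemma card_by_fibers:
  assumes "finite G" "\<And>y. y \<in> T ` G \<Longrightarrow> card {x\<in>G. T x = y} = c"
  shows "card G = card (T ` G) * c"
proof -
  have "card G = (\<Sum>y\<in>T ` G. card {x\<in>G. T x = y})"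
    using sum.group[OF assms(1) finite_imageI[OF assms(1)] subset_refl, where g=T and h="\<lambda>_. 1::nat"] by simp
  also have "\<dots> = card (T ` G) * c" using assms(2) by simp
  finally show ?thesis .
qed

context ffield begin

lemma addsub_GF: "addsub (GF (p ^ k) :: 'f set)"
  unfolding addsub_def by (auto intro: GF_add GF_uminus)

lemma addsub_UNIV: "addsub (UNIV :: 'f set)"
  unfolding addsub_def by auto

lemma tr_add: "tr (p ^ k) s ((x::'f) + y) = tr (p ^ k) s x + tr (p ^ k) s y"
  unfolding tr_def by (simp add: power_mult[symmetric] frob_add sum.distrib)

lemma tr_scal: "a \<in> GF (p ^ k) \<Longrightarrow> tr (p ^ k) s ((a::'f) * x) = a * tr (p ^ k) s x"
  unfolding tr_def by (simp add: power_mult_distrib GF_pow_iter sum_distrib_left)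

lemma tr_in_GF:
  assumes "(x::'f) \<in> GF ((p ^ k) ^ s)"
  shows "tr (p ^ k) s x \<in> GF (p ^ k)"
proof -
  let ?f = "\<lambda>i. x ^ ((p ^ k) ^ i)"
  have fs: "?f s = ?f 0" using assms by (simp add: GF_def)
  have "(tr (p ^ k) s x) ^ (p ^ k) = (\<Sum>i<s. ?f i ^ (p ^ k))"
    unfolding tr_def by (rule frob_sum)
  also have "\<dots> = (\<Sum>i<s. ?f (Suc i))" by (simp add: power_mult[symmetric] mult.commute)
  also have "\<dots> = (\<Sum>i<s. ?f i)"
  proof -
    have "(\<Sum>i<Suc s. ?f i) = ?f 0 + (\<Sum>i<s. ?f (Suc i))" by (rule sum.lessThan_Suc_shift)
    moreover have "(\<Sum>i<Suc s. ?f i) = (\<Sum>i<s. ?f i) + ?f s" by simp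
    ultimately show ?thesis using fs by simp
  qed
  finally show ?thesis unfolding GF_def tr_def by simp
qed

lemma tr_ker_bound:
  assumes k: "k \<ge> 1" and s: "s \<ge> 1"
  shows "card {x::'f. tr (p ^ k) s x = 0} \<le> (p ^ k) ^ (s - 1)"
proof -
  let ?q = "p ^ k"
  have q2: "?q \<ge> 2" using pk_ge2[OF k] .
  let ?P = "\<Sum>i<s. monom (1::'f) (?q ^ i)"
  have inj: "?q ^ i = ?q ^ j \<longleftrightarrow> i = j" for i j using q2 by (simp add: power_inject_exp)
  have "coeff ?P (?q ^ (s - 1)) = (\<Sum>i<s. if i = s - 1 then 1 else 0)"
    by (simp add: coeff_sum coeff_monom inj eq_commute)
  also have "\<dots> = 1" using s by simp
  finally have c: "coeff ?P (?q ^ (s - 1)) = 1" .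
  then have nz: "?P \<noteq> 0" by (metis coeff_0 zero_neq_one)
  have deg: "degree ?P \<le> ?q ^ (s - 1)"
  proof (intro degree_sum_le)
    fix i assume "i \<in> {..<s}"
    then have "?q ^ i \<le> ?q ^ (s - 1)" using q2 by (intro power_increasing) auto
    then show "degree (monom (1::'f) (?q ^ i)) \<le> ?q ^ (s - 1)"
      using degree_monom_le order.trans by blast
  qed simp
  have "{x::'f. tr ?q s x = 0} = {x. poly ?P x = 0}"
    by (simp add: tr_def poly_sum poly_monom)
  then show ?thesis using card_poly_roots_bound'[OF nz deg] by simp
qed

lemma card_GF:
  assumes "k dvd L"
  shows "card (GF (p ^ k) :: 'f set) = p ^ k"
proof -
  have k: "k \<ge> 1" using assms L_pos by (cases k) auto
  obtain s where s: "L = k * s" using assms by auto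
  have s1: "s \<ge> 1" using s L_pos by (cases s) auto
  let ?T = "tr (p ^ k) s :: 'f \<Rightarrow> 'f"
  have fib: "card {x\<in>UNIV. ?T x = y} = card {x\<in>UNIV. ?T x = 0}" if "y \<in> ?T ` UNIV" for y
    by (rule add_hom_fiber[OF addsub_UNIV tr_add that])
  have e: "card (UNIV::'f set) = card (?T ` UNIV) * card {x\<in>UNIV. ?T x = 0}"
    by (rule card_by_fibers) (use fib in auto)
  have kb: "card {x\<in>UNIV. ?T x = 0} \<le> (p ^ k) ^ (s - 1)" using tr_ker_bound[OF k s1] by simp
  have sub: "?T ` UNIV \<subseteq> GF (p ^ k)"
  proof
    fix y assume "y \<in> ?T ` UNIV"
    then obtain x where "y = ?T x" by auto
    moreover have "x \<in> GF ((p ^ k) ^ s)" using GF_UNIV s by (simp add: power_mult)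
    ultimately show "y \<in> GF (p ^ k)" using tr_in_GF by simp
  qed
  have "(p ^ k) * (p ^ k) ^ (s - 1) = (p ^ k) ^ s" using s1 by (cases s) auto
  also have "\<dots> = p ^ L" using s by (simp add: power_mult)
  also have "\<dots> \<le> card (?T ` UNIV) * (p ^ k) ^ (s - 1)"
    using e kb cardF mult_le_mono2 by metis
  finally have "p ^ k * (p ^ k) ^ (s - 1) \<le> card (?T ` UNIV) * (p ^ k) ^ (s - 1)" .
  moreover have "(p ^ k) ^ (s - 1) > 0" using p_ge2 by simp
  ultimately have "p ^ k \<le> card (?T ` UNIV)" using mult_le_cancel2 by blast
  also have "\<dots> \<le> card (GF (p ^ k) :: 'f set)" using sub by (intro card_mono) auto
  finally show ?thesis using GF_card_le[OF k] by simp
qed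

lemma tr_fiber:
  assumes k: "k \<ge> 1" and s: "s \<ge> 1" and dv: "k * s dvd L" and y: "y \<in> GF (p ^ k)"
  shows "card {x\<in>GF ((p ^ k) ^ s). tr (p ^ k) s x = (y::'f)} = (p ^ k) ^ (s - 1)"
proof -
  let ?T = "tr (p ^ k) s :: 'f \<Rightarrow> 'f"
  let ?G = "GF ((p ^ k) ^ s) :: 'f set"
  have G: "?G = GF (p ^ (k * s))" by (simp add: power_mult)
  have kdv: "k dvd L" using dv dvd_mult_left by blast
  have "(p ^ k) * (p ^ k) ^ (s - 1) = (p ^ k) ^ s" using s by (cases s) auto
  also have "\<dots> = p ^ (k * s)" by (simp add: power_mult)
  finally have cG: "card ?G = card (GF (p ^ k) :: 'f set) * (p ^ k) ^ (s - 1)"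
    using card_GF[OF dv] card_GF[OF kdv] G by simp
  have sub: "?T ` ?G \<subseteq> GF (p ^ k)" using tr_in_GF by auto
  have fib: "card {x\<in>?G. ?T x = y} = card {x\<in>?G. ?T x = 0}" if "y \<in> ?T ` ?G" for y
    using add_hom_fiber[OF _ tr_add that] addsub_GF G by simp
  have kb: "card {x\<in>?G. ?T x = 0} \<le> (p ^ k) ^ (s - 1)"
    by (rule order_trans[OF card_mono tr_ker_bound[OF k s]]) auto
  have ne: "?G \<noteq> {}" using GF_0 G by blast
  have "card {x\<in>?G. ?T x = 0} = (p ^ k) ^ (s - 1) \<and> ?T ` ?G = GF (p ^ k)"
    by (rule fiber_count_gen[OF _ _ sub fib cG kb ne]) auto
  then show ?thesis using fib y by auto
qed

end


locale ffq = ffield p L TY for p L :: nat and TY :: "'f::{field,finite} itself" +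
  fixes m :: nat
  assumes m_pos: "m \<ge> 1" and m_dvd: "m dvd L"
begin

abbreviation "q \<equiv> p ^ m"

lemma q_ge3: "q \<ge> 3"
proof -
  have "q \<ge> 2" using pk_ge2[OF m_pos] .
  moreover have "odd q" using odd_ppow .
  ultimately show ?thesis by presburger
qed

lemma card_GFq: "card (GF q :: 'f set) = q" using card_GF[OF m_dvd] .

lemma two_nz: "(2::'f) \<noteq> 0"
proof
  assume "(2::'f) = 0"
  then have "of_nat 2 = (0::'f)" by simp
  then have "p dvd 2" using CHAR_eq by (simp only: of_nat_eq_0_iff_char_dvd)
  then have "p \<le> 2" by (simp add: dvd_imp_le)
  then have "p = 2" using p_ge2 by simp
  then show False using p_odd by simp
qed

lemma one_neq_minus_one: "(1::'f) \<noteq> -1"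
proof
  assume h: "(1::'f) = -1"
  have "(1::'f) + 1 = -1 + 1" using h by (rule arg_cong[where f="\<lambda>x. x + 1"])
  then have "(2::'f) = 0" by simp
  then show False using two_nz by simp
qed

lemma GFq_unit: "a \<in> GF q \<Longrightarrow> (a::'f) \<noteq> 0 \<Longrightarrow> a ^ (q - 1) = 1"
proof -
  assume "a \<in> GF q" "a \<noteq> 0"
  then have "a ^ q = a" by (simp add: GF_def)
  moreover have "q = Suc (q - 1)" using q_ge3 by simp
  ultimately have "a * a ^ (q - 1) = a * 1" by (metis power_Suc mult_1_right)
  then show ?thesis using \<open>a \<noteq> 0\<close> by simp
qed

lemma pow_eq1_GF: "d dvd q - 1 \<Longrightarrow> (x::'f) ^ d = 1 \<Longrightarrow> x \<in> GF q"
proof -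
  assume "d dvd q - 1" "x ^ d = 1"
  then obtain e where "q - 1 = d * e" by auto
  then have "x ^ (q - 1) = 1" using \<open>x ^ d = 1\<close> by (simp add: power_mult)
  moreover have "q = Suc (q - 1)" using q_ge3 by simp
  ultimately have "x ^ q = x" by (metis power_Suc mult_1_right)
  then show ?thesis by (simp add: GF_def)
qed

definition Gs :: "'f set" where "Gs = GF q - {0}"

lemma card_Gs: "card Gs = q - 1"
  unfolding Gs_def using card_GFq by (simp add: card_Diff_singleton)

lemma Gs_mult: "x \<in> Gs \<Longrightarrow> y \<in> Gs \<Longrightarrow> x * y \<in> Gs"
  unfolding Gs_def by (auto intro: GF_mult)

lemma Gs_inv: "x \<in> Gs \<Longrightarrow> inverse x \<in> Gs"
  unfolding Gs_def by (auto intro: GF_inverse)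

lemma card_roots_unity:
  assumes d: "d dvd q - 1" "d \<ge> 1"
  shows "card {x::'f. x ^ d = 1} = d"
proof -
  obtain e where e: "q - 1 = d * e" using d by auto
  have e1: "e \<ge> 1" using e q_ge3 by (cases e) auto
  let ?T = "\<lambda>x::'f. x ^ e"
  have fib: "card {x\<in>Gs. ?T x = y} = card {x\<in>Gs. ?T x = 1}" if "y \<in> ?T ` Gs" for y
    by (rule mult_hom_fiber[OF _ Gs_mult Gs_inv _ that]) (auto simp: Gs_def power_mult_distrib)
  have cG: "card Gs = card (?T ` Gs) * card {x\<in>Gs. ?T x = 1}"
    by (rule card_by_fibers) (use fib in auto)
  have kb: "card {x\<in>Gs. ?T x = 1} \<le> e"
    by (rule order_trans[OF card_mono roots_xn_minus_1[OF e1]]) auto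
  have sub: "?T ` Gs \<subseteq> {x. x ^ d = 1}"
  proof
    fix y assume "y \<in> ?T ` Gs"
    then obtain x where x: "x \<in> Gs" "y = x ^ e" by auto
    have "y ^ d = x ^ (q - 1)" using x e by (simp add: power_mult[symmetric] mult.commute)
    also have "\<dots> = 1" using x GFq_unit unfolding Gs_def by auto
    finally show "y \<in> {x. x ^ d = 1}" by simp
  qed
  have "d * e \<le> card (?T ` Gs) * e" using cG kb card_Gs e by (metis mult_le_mono2)
  then have "d \<le> card (?T ` Gs)" using e1 by simp
  also have "\<dots> \<le> card {x::'f. x ^ d = 1}" using sub by (intro card_mono) auto
  finally show ?thesis using roots_xn_minus_1[OF d(2)] by simp
qed

definition Sq :: "'f set" where "Sq = (\<lambda>x. x ^ 2) ` Gs"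

lemma card_Sq: "card Sq * 2 = q - 1"
proof -
  let ?T = "\<lambda>x::'f. x ^ 2"
  have fib: "card {x\<in>Gs. ?T x = y} = card {x\<in>Gs. ?T x = 1}" if "y \<in> ?T ` Gs" for y
    by (rule mult_hom_fiber[OF _ Gs_mult Gs_inv _ that]) (auto simp: Gs_def power_mult_distrib)
  have k: "{x\<in>Gs. ?T x = 1} = {1, -1}"
  proof -
    have "x ^ 2 = 1 \<longleftrightarrow> x = 1 \<or> x = -1" for x :: 'f
      by (metis power2_eq_1_iff)
    then show ?thesis unfolding Gs_def by (auto intro: GF_uminus)
  qed
  have "card Gs = card (?T ` Gs) * card {x\<in>Gs. ?T x = 1}"
    by (rule card_by_fibers) (use fib in auto)
  then show ?thesis using k card_Gs one_neq_minus_one unfolding Sq_def by simp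
qed

lemma Sq_sub: "Sq \<subseteq> Gs" unfolding Sq_def Gs_def by (auto intro: GF_power)

lemma Sq_iff: "a \<in> Sq \<longleftrightarrow> a \<noteq> 0 \<and> (\<exists>b\<in>GF q. b ^ 2 = a)"
  unfolding Sq_def Gs_def by auto

lemma half_ge1: "(q - 1) div 2 \<ge> 1" using q_ge3 by linarith

lemma euler_sq:
  assumes a: "a \<in> Gs"
  shows "a ^ ((q - 1) div 2) = 1 \<longleftrightarrow> a \<in> Sq"
proof
  assume "a \<in> Sq"
  then obtain b where b: "b \<in> Gs" "a = b ^ 2" unfolding Sq_def by auto
  have e: "2 * ((q - 1) div 2) = q - 1" using odd_ppow[of m] q_ge3 by presburger
  have "a ^ ((q - 1) div 2) = b ^ (2 * ((q - 1) div 2))" using b by (simp add: power_mult)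
  also have "\<dots> = 1" using e b GFq_unit unfolding Gs_def by simp
  finally show "a ^ ((q - 1) div 2) = 1" .
next
  assume h: "a ^ ((q - 1) div 2) = 1"
  have sub: "Sq \<subseteq> {x. x ^ ((q - 1) div 2) = 1}"
  proof
    fix x assume "x \<in> Sq"
    then obtain b where b: "b \<in> Gs" "x = b ^ 2" unfolding Sq_def by auto
    have e: "2 * ((q - 1) div 2) = q - 1" using odd_ppow[of m] q_ge3 by presburger
    have "x ^ ((q - 1) div 2) = b ^ (2 * ((q - 1) div 2))" using b by (simp add: power_mult)
    also have "\<dots> = 1" using e b GFq_unit unfolding Gs_def by simp
    finally show "x \<in> {x. x ^ ((q - 1) div 2) = 1}" by simp
  qed
  have "card {x::'f. x ^ ((q - 1) div 2) = 1} \<le> (q - 1) div 2"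
    by (rule roots_xn_minus_1[OF half_ge1])
  also have "\<dots> = card Sq" using card_Sq by simp
  finally have le: "card {x::'f. x ^ ((q - 1) div 2) = 1} \<le> card Sq" .
  have "card Sq \<le> card {x::'f. x ^ ((q - 1) div 2) = 1}" using sub by (intro card_mono) auto
  then have "Sq = {x. x ^ ((q - 1) div 2) = 1}" using sub le by (intro card_subset_eq) auto
  then show "a \<in> Sq" using h by simp
qed

lemma euler_pm:
  assumes a: "a \<in> Gs"
  shows "a ^ ((q - 1) div 2) = 1 \<or> a ^ ((q - 1) div 2) = -1"
proof -
  have e: "2 * ((q - 1) div 2) = q - 1" using odd_ppow[of m] q_ge3 by presburger
  have "(a ^ ((q - 1) div 2)) ^ 2 = 1" using e a GFq_unit unfolding Gs_def
    by (simp add: power_mult[symmetric] mult.commute)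
  then show ?thesis by (metis power2_eq_1_iff)
qed

lemma eta_alt: "a \<in> GF q \<Longrightarrow> eta q a = (if a = 0 then 0 else if a \<in> Sq then 1 else -1)"
  unfolding eta_def using Sq_iff by auto

lemma eta_pow: "a \<in> GF q \<Longrightarrow> of_int (eta q a) = (a::'f) ^ ((q - 1) div 2)"
proof -
  assume a: "a \<in> GF q"
  show ?thesis
  proof (cases "a = 0")
    case True then show ?thesis using half_ge1 a by (simp add: eta_alt)
  next
    case False
    then have aG: "a \<in> Gs" using a by (simp add: Gs_def)
    show ?thesis using euler_sq[OF aG] euler_pm[OF aG] eta_alt[OF a] False by auto
  qed
qed

lemma eta_range: "eta q a \<in> {-1, 0, 1}" unfolding eta_def by auto

lemma of_int_inj3:
  assumes "x \<in> {-1, 0, 1}" "y \<in> {-1, 0, 1}" "(of_int x :: 'f) = of_int y"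
  shows "x = y"
  using assms one_neq_minus_one one_neq_minus_one[symmetric] by auto

lemma eta_mult: "a \<in> GF q \<Longrightarrow> b \<in> GF q \<Longrightarrow> eta q ((a::'f) * b) = eta q a * eta q b"
proof -
  assume a: "a \<in> GF q" and b: "b \<in> GF q"
  have "(of_int (eta q (a * b)) :: 'f) = of_int (eta q a * eta q b)"
    using eta_pow[OF GF_mult[OF a b]] eta_pow[OF a] eta_pow[OF b] by (simp add: power_mult_distrib)
  moreover have "eta q a * eta q b \<in> {-1, 0, 1}" using eta_range[of a] eta_range[of b] by auto
  ultimately show ?thesis using of_int_inj3 eta_range by blast
qed

lemma eta_minus1: "eta q (-1::'f) = (-1) ^ ((q - 1) div 2)"
proof -
  have m1: "(-1::'f) \<in> GF q" using GF_uminus[OF GF_1] .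
  have "(of_int (eta q (-1::'f)) :: 'f) = of_int ((-1) ^ ((q - 1) div 2))"
    using eta_pow[OF m1] by simp
  moreover have "((-1::int) ^ ((q - 1) div 2)) \<in> {-1, 0, 1}"
    by (cases "even ((q - 1) div 2)") auto
  ultimately show ?thesis using of_int_inj3 eta_range by blast
qed

lemma eta_zero[simp]: "eta q (0::'f) = 0" unfolding eta_def by simp

lemma eta_nz: "a \<noteq> 0 \<Longrightarrow> eta q (a::'f) \<noteq> 0" unfolding eta_def by simp

lemma eta_sq_mult: "b \<in> GF q \<Longrightarrow> b \<noteq> 0 \<Longrightarrow> a \<in> GF q \<Longrightarrow> eta q ((b::'f) ^ 2 * a) = eta q a"
proof -
  assume b: "b \<in> GF q" "b \<noteq> 0" and a: "a \<in> GF q"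
  have "eta q (b ^ 2) = 1" using b unfolding eta_def by (auto simp: GF_power)
  then show ?thesis using eta_mult[OF GF_power[OF b(1)] a] by simp
qed

lemma eta_sqr: "b \<in> GF q \<Longrightarrow> b \<noteq> 0 \<Longrightarrow> eta q ((b::'f) ^ 2) = 1"
  unfolding eta_def by (auto simp: GF_power)

lemma exists_nonsq: "\<exists>c\<in>Gs. c \<notin> Sq"
proof (rule ccontr)
  assume "\<not> ?thesis"
  then have "Gs \<subseteq> Sq" by auto
  then have "Gs = Sq" using Sq_sub by auto
  then show False using card_Sq card_Gs q_ge3 by simp
qed

lemma eta_sum: "(\<Sum>a\<in>GF q. eta q (a::'f)) = 0"
proof -
  obtain c where c: "c \<in> Gs" "c \<notin> Sq" using exists_nonsq by auto
  have cG: "c \<in> GF q" "c \<noteq> 0" using c by (auto simp: Gs_def)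
  have ec: "eta q c = -1" using eta_alt[OF cG(1)] c cG by simp
  have im: "(\<lambda>a. c * a) ` GF q = GF q"
  proof (intro equalityI subsetI)
    fix x :: 'f assume "x \<in> (\<lambda>a. c * a) ` GF q" then show "x \<in> GF q" using cG by (auto intro: GF_mult)
  next
    fix x :: 'f assume "x \<in> GF q"
    then have "x / c \<in> GF q" "x = c * (x / c)" using cG by (auto intro: GF_divide)
    then show "x \<in> (\<lambda>a. c * a) ` GF q" by blast
  qed
  have "(\<Sum>a\<in>GF q. eta q (c * a)) = (\<Sum>a\<in>(\<lambda>a. c * a) ` GF q. eta q a)"
    by (subst sum.reindex) (use cG in \<open>auto simp: inj_on_def\<close>)
  then have "(\<Sum>a\<in>GF q. eta q (a::'f)) = (\<Sum>a\<in>GF q. eta q (c * a))" using im by simp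
  also have "\<dots> = - (\<Sum>a\<in>GF q. eta q (a::'f))"
    by (simp add: eta_mult[OF cG(1)] ec sum_negf)
  finally show ?thesis by simp
qed

end


context ffq begin

lemma GFq_minus: "t \<in> GF q \<Longrightarrow> u \<in> GF q \<Longrightarrow> (t::'f) - u \<in> GF q" by (rule GF_diff)

lemma sum_shift: "t \<in> GF q \<Longrightarrow> (\<Sum>u\<in>GF q. f ((t::'f) - u)) = (\<Sum>u\<in>GF q. (f u :: int))"
proof -
  assume t: "t \<in> GF q"
  have im: "(\<lambda>u. t - u) ` GF q = (GF q :: 'f set)"
  proof (intro equalityI subsetI)
    fix x :: 'f assume "x \<in> (\<lambda>u. t - u) ` GF q" then show "x \<in> GF q" using t by (auto intro: GF_diff)
  next
    fix x :: 'f assume "x \<in> GF q"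
    then have "t - x \<in> GF q" "x = t - (t - x)" using t by (auto intro: GF_diff)
    then show "x \<in> (\<lambda>u. t - u) ` GF q" by blast
  qed
  have "(\<Sum>u\<in>GF q. f (t - u)) = (\<Sum>u\<in>(\<lambda>u. t - u) ` GF q. f u)"
    by (subst sum.reindex) (auto simp: inj_on_def)
  then show ?thesis using im by simp
qed

lemma sum_scale: "c \<in> GF q \<Longrightarrow> c \<noteq> 0 \<Longrightarrow> (\<Sum>u\<in>GF q. f ((c::'f) * u)) = (\<Sum>u\<in>GF q. (f u :: int))"
proof -
  assume c: "c \<in> GF q" "c \<noteq> 0"
  have im: "(\<lambda>a. c * a) ` GF q = (GF q :: 'f set)"
  proof (intro equalityI subsetI)
    fix x :: 'f assume "x \<in> (\<lambda>a. c * a) ` GF q" then show "x \<in> GF q" using c by (auto intro: GF_mult)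
  next
    fix x :: 'f assume "x \<in> GF q"
    then have "x / c \<in> GF q" "x = c * (x / c)" using c by (auto intro: GF_divide)
    then show "x \<in> (\<lambda>a. c * a) ` GF q" by blast
  qed
  have "(\<Sum>u\<in>GF q. f (c * u)) = (\<Sum>u\<in>(\<lambda>a. c * a) ` GF q. f u)"
    by (subst sum.reindex) (use c in \<open>auto simp: inj_on_def\<close>)
  then show ?thesis using im by simp
qed

lemma eta_sum_scaled: "c \<in> GF q \<Longrightarrow> (\<Sum>u\<in>GF q. eta q ((c::'f) * u)) = 0"
  using eta_mult[of c] eta_sum by (simp add: sum_distrib_left[symmetric])

lemma eta_sum_shift: "t \<in> GF q \<Longrightarrow> (\<Sum>u\<in>GF q. eta q ((t::'f) - u)) = 0"
  using sum_shift[of t "eta q"] eta_sum by simp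

lemma sq_count:
  assumes l: "l \<in> GF q" "l \<noteq> 0" and t: "t \<in> GF q"
  shows "int (card {z\<in>GF q. l * z ^ 2 = (t::'f)}) = 1 + eta q (l * t)"
proof (cases "t = 0")
  case True
  then have "{z\<in>GF q. l * z ^ 2 = (t::'f)} = {0}" using l by auto
  then show ?thesis using True by simp
next
  case False
  have tl: "t / l \<in> GF q" using t l by (auto intro: GF_divide)
  have e1: "eta q (l * t) = eta q (t / l)"
  proof -
    have "l * t = l ^ 2 * (t / l)" using l by (simp add: power2_eq_square)
    then show ?thesis using eta_sq_mult[OF l tl] by simp
  qed
  have S: "{z\<in>GF q. l * z ^ 2 = t} = {z\<in>GF q. z ^ 2 = t / l}" using l by (auto simp: field_simps)
  show ?thesis
  proof (cases "\<exists>b\<in>GF q. b ^ 2 = t / l")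
    case True
    then obtain b where b: "b \<in> GF q" "b ^ 2 = t / l" by auto
    have bnz: "b \<noteq> 0" using b False l by auto
    have "{z\<in>GF q. z ^ 2 = t / l} = {b, -b}"
    proof -
      have "z ^ 2 = b ^ 2 \<longleftrightarrow> z = b \<or> z = -b" for z :: 'f by (rule power2_eq_iff)
      then show ?thesis using b by (auto intro: GF_uminus)
    qed
    moreover have "b \<noteq> -b"
    proof
      assume h: "b = -b"
      have "b + b = -b + b" using h by (rule arg_cong[where f="\<lambda>x. x + b"])
      then have "b + b = 0" by simp
      then have "2 * b = 0" by (simp only: mult_2)
      then show False using two_nz bnz by simp
    qed
    moreover have "eta q (t / l) = 1" using True False l unfolding eta_def by auto
    ultimately show ?thesis using S e1 by simp
  next
    case nb: False
    then have "{z\<in>GF q. z ^ 2 = t / l} = {}" by auto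
    moreover have "eta q (t / l) = -1" using nb False l unfolding eta_def by auto
    ultimately show ?thesis using S e1 by simp
  qed
qed

lemma sum_sq:
  assumes l: "(l::'f) \<in> GF q" "l \<noteq> 0"
  shows "(\<Sum>z\<in>GF q. f (l * z ^ 2)) = (\<Sum>u\<in>GF q. (1 + eta q (l * u)) * (f u :: int))"
proof -
  have sub: "(\<lambda>z. l * z ^ 2) ` GF q \<subseteq> (GF q :: 'f set)" using l by (auto intro: GF_mult GF_power)
  have "(\<Sum>z\<in>GF q. f (l * z ^ 2)) = (\<Sum>u\<in>GF q. \<Sum>z\<in>{z\<in>GF q. l * z ^ 2 = u}. f (l * z ^ 2))"
    using sum.group[OF GF_finite GF_finite sub, where h="\<lambda>z. f (l * z ^ 2)"] by simp
  also have "\<dots> = (\<Sum>u\<in>GF q. int (card {z\<in>GF q. l * z ^ 2 = u}) * f u)"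
    by (intro sum.cong refl) simp
  also have "\<dots> = (\<Sum>u\<in>GF q. (1 + eta q (l * u)) * f u)"
    by (intro sum.cong refl) (simp add: sq_count[OF l])
  finally show ?thesis .
qed

definition nu :: "'f \<Rightarrow> int" where "nu t = (if t = 0 then int q else 0) - 1"

lemma sum_remove0: "(\<Sum>u\<in>GF q. g u) = g 0 + (\<Sum>u\<in>Gs. (g u :: int))"
  unfolding Gs_def by (rule sum.remove) auto

lemma jacobi:
  assumes t: "t \<in> GF q"
  shows "(\<Sum>u\<in>GF q. eta q (u * ((t::'f) - u))) = eta q (-1::'f) * nu t"
proof (cases "t = 0")
  case True
  have "(\<Sum>u\<in>GF q. eta q (u * ((t::'f) - u))) = (\<Sum>u\<in>Gs. eta q (u * (t - u)))"
    using sum_remove0 by simp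
  also have "\<dots> = (\<Sum>u\<in>Gs. eta q (-1::'f))"
  proof (intro sum.cong refl)
    fix u assume u: "u \<in> Gs"
    have "u * (t - u) = u ^ 2 * (-1)" using True by (simp add: power2_eq_square)
    moreover have "eta q (u ^ 2 * (-1)) = eta q (-1::'f)"
      using eta_sq_mult[of u "-1"] u GF_uminus[OF GF_1] unfolding Gs_def by blast
    ultimately show "eta q (u * (t - u)) = eta q (-1::'f)" by simp
  qed
  also have "\<dots> = int (card Gs) * eta q (-1::'f)" by simp
  also have "int (card Gs) = int q - 1" using card_Gs q_ge3 by (simp add: of_nat_diff)
  also have "(int q - 1) * eta q (-1::'f) = eta q (-1::'f) * nu t" using True by (simp add: nu_def)
  finally show ?thesis .
next
  case False
  have "(\<Sum>u\<in>GF q. eta q (u * ((t::'f) - u))) = (\<Sum>u\<in>Gs. eta q (u * (t - u)))"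
    using sum_remove0 by simp
  also have "\<dots> = (\<Sum>u\<in>Gs. eta q (t / u - 1))"
  proof (intro sum.cong refl)
    fix u assume u: "u \<in> Gs"
    have uG: "u \<in> GF q" "u \<noteq> 0" using u unfolding Gs_def by auto
    have eq: "u * (t - u) = u ^ 2 * (t / u - 1)" using uG by (simp add: power2_eq_square field_simps)
    have "t / u - 1 \<in> GF q" using GF_diff[OF GF_divide[OF t uG(1)] GF_1] .
    then have "eta q (u ^ 2 * (t / u - 1)) = eta q (t / u - 1)" by (rule eta_sq_mult[OF uG])
    then show "eta q (u * (t - u)) = eta q (t / u - 1)" by (simp only: eq)
  qed
  also have "\<dots> = (\<Sum>v\<in>(\<lambda>u. t / u - 1) ` Gs. eta q v)"
    by (subst sum.reindex) (use False in \<open>auto simp: inj_on_def Gs_def\<close>)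
  also have "(\<lambda>u. t / u - 1) ` Gs = GF q - {-1}"
  proof (intro equalityI subsetI)
    fix x :: 'f assume "x \<in> (\<lambda>u. t / u - 1) ` Gs"
    then obtain u where u: "u \<in> GF q" "u \<noteq> 0" "x = t / u - 1" unfolding Gs_def by auto
    have "x \<in> GF q" using u(3) GF_diff[OF GF_divide[OF t u(1)] GF_1] by simp
    moreover have "x \<noteq> -1"
    proof
      assume "x = -1"
      then have "t / u = 0" using u(3) by simp
      then show False using False u(2) by simp
    qed
    ultimately show "x \<in> GF q - {-1}" by simp
  next
    fix x :: 'f assume x: "x \<in> GF q - {-1}"
    have x1: "x + 1 \<noteq> 0"
    proof
      assume "x + 1 = 0"
      then have "x = -1" by (simp add: eq_neg_iff_add_eq_0)
      then show False using x by simp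
    qed
    have xG: "x \<in> GF q" using x by simp
    have "t / (x + 1) \<in> GF q" using GF_divide[OF t GF_add[OF xG GF_1]] .
    moreover have "t / (x + 1) \<noteq> 0" using x1 False by simp
    ultimately have "t / (x + 1) \<in> Gs" unfolding Gs_def by simp
    moreover have "t / (t / (x + 1)) = x + 1" using x1 False by simp
    then have "x = t / (t / (x + 1)) - 1" by simp
    ultimately show "x \<in> (\<lambda>u. t / u - 1) ` Gs" by blast
  qed
  also have "(\<Sum>v\<in>GF q - {-1}. eta q (v::'f)) = (\<Sum>v\<in>GF q. eta q (v::'f)) - eta q (-1::'f)"
    by (subst sum_diff1) (auto intro: GF_uminus)
  also have "\<dots> = eta q (-1::'f) * nu t" using eta_sum False by (simp add: nu_def)
  finally show ?thesis .
qed

end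


context ffq begin

abbreviation Fq :: "'f set" where "Fq \<equiv> GF q"

definition Dc :: "(nat \<Rightarrow> 'f) \<Rightarrow> nat \<Rightarrow> 'f \<Rightarrow> nat" where
  "Dc \<mu> k t = card {v \<in> PiE {..<k} (\<lambda>_. GF q). (\<Sum>i<k. \<mu> i * v i ^ 2) = t}"

lemma Dc_Suc:
  "int (Dc \<mu> (Suc k) t) = (\<Sum>z\<in>GF q. int (Dc \<mu> k (t - \<mu> k * z ^ 2)))"
proof -
  let ?S = "\<lambda>k v. (\<Sum>i<k. \<mu> i * v i ^ 2)"
  let ?P = "\<lambda>k. PiE {..<k} (\<lambda>_. GF q :: 'f set)"
  define A where "A = (SIGMA z:(GF q :: 'f set). {w \<in> ?P k. ?S k w = t - \<mu> k * z ^ 2})"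
  define B where "B = {v \<in> ?P (Suc k). ?S (Suc k) v = t}"
  let ?f = "\<lambda>(z, w). w(k := z)"
  let ?g = "\<lambda>v. (v k, v(k := undefined))"
  have S1: "?S (Suc k) (w(k := z)) = ?S k w + \<mu> k * z ^ 2" if "w \<in> ?P k" for w z
  proof -
    have "?S (Suc k) (w(k := z)) = (\<Sum>i<k. \<mu> i * (w(k := z)) i ^ 2) + \<mu> k * (w(k := z)) k ^ 2"
      by (rule sum.lessThan_Suc)
    also have "(\<Sum>i<k. \<mu> i * (w(k := z)) i ^ 2) = ?S k w"
      by (rule sum.cong[OF refl]) simp
    finally show ?thesis by (simp only: fun_upd_same)
  qed
  have S2: "?S k (v(k := undefined)) = ?S k v" for v :: "nat \<Rightarrow> 'f"
    by (rule sum.cong[OF refl]) simp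
  have insk: "{..<Suc k} = insert k {..<k}" by auto
  have bij: "bij_betw ?f A B"
  proof (rule bij_betw_byWitness[where f'="?g"])
    show "\<forall>a\<in>A. ?g (?f a) = a"
    proof
      fix a assume "a \<in> A"
      then obtain z w where a: "a = (z, w)" "w \<in> ?P k" unfolding A_def by auto
      have "w k = undefined" by (rule PiE_arb[OF a(2)]) simp
      then have "w(k := undefined) = w" by auto
      then show "?g (?f a) = a" using a by simp
    qed
    show "\<forall>a'\<in>B. ?f (?g a') = a'" by auto
    show "?f ` A \<subseteq> B"
    proof
      fix x assume "x \<in> ?f ` A"
      then obtain z w where zw: "z \<in> GF q" "w \<in> ?P k" "?S k w = t - \<mu> k * z ^ 2" "x = w(k := z)"
        unfolding A_def by auto
      have "x \<in> ?P (Suc k)" using zw insk PiE_fun_upd[OF zw(1) zw(2)] by simp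
      moreover have "?S (Suc k) x = t" using S1[OF zw(2)] zw by simp
      ultimately show "x \<in> B" unfolding B_def by simp
    qed
    show "?g ` B \<subseteq> A"
    proof
      fix x assume "x \<in> ?g ` B"
      then obtain v where v: "v \<in> ?P (Suc k)" "?S (Suc k) v = t" "x = ?g v" unfolding B_def by auto
      have vk: "v k \<in> GF q" using v(1) by auto
      have w: "v(k := undefined) \<in> ?P k" using fun_upd_in_PiE[of k "{..<k}" v] v(1) insk by simp
      have "?S (Suc k) v = ?S k v + \<mu> k * v k ^ 2" by (rule sum.lessThan_Suc)
      then have "?S k (v(k := undefined)) = t - \<mu> k * v k ^ 2" using v(2) S2 by (simp add: algebra_simps)
      then show "x \<in> A" unfolding A_def using v(3) vk w by simp
    qed
  qed
  have "Dc \<mu> (Suc k) t = card A" unfolding Dc_def B_def[symmetric] using bij_betw_same_card[OF bij] by simp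
  also have "card A = (\<Sum>z\<in>GF q. Dc \<mu> k (t - \<mu> k * z ^ 2))"
  proof -
    have finP: "finite (?P k)" by (intro finite_PiE) auto
    show ?thesis unfolding A_def Dc_def
      by (subst card_SigmaI) (auto intro: finite_subset[OF _ finP])
  qed
  finally show ?thesis by simp
qed

lemma sum_const_GF: "(\<Sum>u\<in>(GF q :: 'f set). (c::int)) = int q * c"
  using card_GFq by simp

lemma sum_nu: "(\<Sum>u\<in>(GF q :: 'f set). nu u) = 0"
proof -
  have "(\<Sum>u\<in>Fq. nu u) = (\<Sum>u\<in>Fq. (if u = 0 then int q else 0)) - (\<Sum>u\<in>Fq. 1)"
    unfolding nu_def by (simp add: sum_subtractf)
  also have "\<dots> = 0" using card_GFq by (simp add: sum.delta)
  finally show ?thesis .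
qed

lemma sum_nu_shift: "t \<in> GF q \<Longrightarrow> (\<Sum>u\<in>GF q. nu ((t::'f) - u)) = 0"
  using sum_shift[of t nu] sum_nu by simp

lemma sum_eta_nu:
  assumes l: "l \<in> GF q" and t: "t \<in> GF q"
  shows "(\<Sum>u\<in>GF q. eta q ((l::'f) * u) * nu (t - u)) = int q * eta q (l * t)"
proof -
  have e: "eta q (l * u) * nu (t - u) = (if u = t then int q * eta q (l * t) else 0) - eta q (l * u)" for u :: 'f
    by (auto simp: nu_def algebra_simps)
  have "(\<Sum>u\<in>Fq. eta q (l * u) * nu (t - u))
      = (\<Sum>u\<in>Fq. (if u = t then int q * eta q (l * t) else 0)) - (\<Sum>u\<in>Fq. eta q (l * u))"
    by (simp only: e sum_subtractf)
  also have "\<dots> = int q * eta q (l * t)" using t eta_sum_scaled[OF l] by (simp add: sum.delta')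
  finally show ?thesis .
qed

lemma GF_m1pow: "(-1::'f) ^ j \<in> GF q" by (rule GF_power[OF GF_uminus[OF GF_1]])

lemma eta_one: "eta q (1::'f) = 1" using eta_sqr[of 1] by simp

lemma Dc_zero: "int (Dc \<mu> 0 t) = (if t = 0 then 1 else 0)"
proof -
  have "{v \<in> PiE {..<0} (\<lambda>_. GF q). (\<Sum>i<0. \<mu> i * v i ^ 2) = t} = (if t = 0 then {\<lambda>_. undefined} else {})"
    by auto
  then show ?thesis unfolding Dc_def by simp
qed

lemma Dc_rec:
  assumes l: "\<mu> k \<in> Fq" "\<mu> k \<noteq> 0"
  shows "int (Dc \<mu> (Suc k) t) = (\<Sum>u\<in>Fq. (1 + eta q (\<mu> k * u)) * int (Dc \<mu> k (t - u)))"
  using Dc_Suc[of \<mu> k t] sum_sq[OF l, where f="\<lambda>u. int (Dc \<mu> k (t - u))"] by simp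

lemma Dc_formula:
  assumes lam: "\<And>i. i < r \<Longrightarrow> lam i \<in> Fq \<and> lam i \<noteq> 0"
  shows "k \<le> r \<Longrightarrow> t \<in> Fq \<Longrightarrow>
    (even k \<longrightarrow> int q * int (Dc lam k t) =
        int q ^ k + nu t * int q ^ (k div 2) * eta q ((-1) ^ (k div 2) * (\<Prod>i<k. lam i))) \<and>
    (odd k \<longrightarrow> int (Dc lam k t) =
        int q ^ (k - 1) + int q ^ ((k - 1) div 2) * eta q ((-1) ^ ((k - 1) div 2) * (\<Prod>i<k. lam i) * t))"
proof (induction k arbitrary: t)
  case 0
  show ?case using 0 by (simp add: Dc_zero eta_one nu_def)
next
  case (Suc k)
  have kr: "k < r" using Suc.prems by simp
  define l where "l = lam k"
  have l: "l \<in> Fq" "l \<noteq> 0" using lam[OF kr] l_def by auto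
  define \<Delta> where "\<Delta> = (\<Prod>i<k. lam i)"
  have \<Delta>: "\<Delta> \<in> Fq" unfolding \<Delta>_def using lam kr by (intro GF_prod) auto
  have \<Delta>S: "(\<Prod>i<Suc k. lam i) = \<Delta> * l" unfolding \<Delta>_def l_def by simp
  have t: "t \<in> Fq" using Suc.prems by simp
  have rec: "int (Dc lam (Suc k) t) = (\<Sum>u\<in>Fq. (1 + eta q (l * u)) * int (Dc lam k (t - u)))"
    unfolding l_def by (rule Dc_rec) (use l l_def in auto)
  have IH: "\<And>u. u \<in> Fq \<Longrightarrow> (even k \<longrightarrow> int q * int (Dc lam k u) =
        int q ^ k + nu u * int q ^ (k div 2) * eta q ((-1) ^ (k div 2) * \<Delta>)) \<and>
    (odd k \<longrightarrow> int (Dc lam k u) =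
        int q ^ (k - 1) + int q ^ ((k - 1) div 2) * eta q ((-1) ^ ((k - 1) div 2) * \<Delta> * u))"
    using Suc.IH Suc.prems \<Delta>_def by simp
  have tu: "t - u \<in> Fq" if "u \<in> Fq" for u using GF_diff[OF t that] .
  show ?case
  proof (cases "even k")
    case True
    define C where "C = int q ^ (k div 2) * eta q ((-1) ^ (k div 2) * \<Delta>)"
    have IHe: "int q * int (Dc lam k (t - u)) = int q ^ k + nu (t - u) * C" if "u \<in> Fq" for u
      using IH[OF tu[OF that]] True C_def by (simp add: mult.assoc)
    have "int q * int (Dc lam (Suc k) t) = (\<Sum>u\<in>Fq. (1 + eta q (l * u)) * (int q * int (Dc lam k (t - u))))"
      unfolding rec by (simp add: sum_distrib_left algebra_simps)
    also have "\<dots> = (\<Sum>u\<in>Fq. (1 + eta q (l * u)) * (int q ^ k + nu (t - u) * C))"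
    proof (intro sum.cong refl)
      fix u assume u: "u \<in> Fq"
      show "(1 + eta q (l * u)) * (int q * int (Dc lam k (t - u))) = (1 + eta q (l * u)) * (int q ^ k + nu (t - u) * C)"
        by (simp only: IHe[OF u])
    qed
    also have "\<dots> = (\<Sum>u\<in>Fq. int q ^ k) + int q ^ k * (\<Sum>u\<in>Fq. eta q (l * u))
        + C * (\<Sum>u\<in>Fq. nu (t - u)) + C * (\<Sum>u\<in>Fq. eta q (l * u) * nu (t - u))"
      by (simp add: sum.distrib sum_distrib_left algebra_simps)
    also have "\<dots> = int q * (int q ^ k + C * eta q (l * t))"
      using card_GFq eta_sum_scaled[OF l(1)] sum_nu_shift[OF t] sum_eta_nu[OF l(1) t]
      by (simp add: algebra_simps)
    finally have "int (Dc lam (Suc k) t) = int q ^ k + C * eta q (l * t)"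
      using p_ge2 by simp
    moreover have "eta q ((-1) ^ (k div 2) * \<Delta>) * eta q (l * t) = eta q ((-1) ^ (k div 2) * (\<Delta> * l) * t)"
    proof -
      have "eta q ((-1) ^ (k div 2) * (\<Delta> * l) * t) = eta q (((-1) ^ (k div 2) * \<Delta>) * (l * t))"
        by (simp add: algebra_simps)
      also have "\<dots> = eta q ((-1) ^ (k div 2) * \<Delta>) * eta q (l * t)"
        by (rule eta_mult) (auto intro: GF_mult GF_m1pow \<Delta> l t)
      finally show ?thesis by simp
    qed
    ultimately show ?thesis using True \<Delta>S C_def by (simp add: mult.assoc)
  next
    case False
    define d where "d = int q ^ ((k - 1) div 2)"
    define \<kappa> where "\<kappa> = (-1) ^ ((k - 1) div 2) * \<Delta>"
    have \<kappa>: "\<kappa> \<in> Fq" unfolding \<kappa>_def by (intro GF_mult GF_m1pow \<Delta>)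
    have IHo: "int (Dc lam k (t - u)) = int q ^ (k - 1) + d * eta q (\<kappa> * (t - u))" if "u \<in> Fq" for u
      using IH[OF tu[OF that]] False d_def \<kappa>_def by simp
    have s1: "(\<Sum>u\<in>Fq. eta q (\<kappa> * (t - u))) = 0"
    proof -
      have "(\<Sum>u\<in>Fq. eta q (\<kappa> * (t - u))) = (\<Sum>u\<in>Fq. eta q \<kappa> * eta q (t - u))"
        by (intro sum.cong refl eta_mult \<kappa> tu)
      also have "\<dots> = 0" using eta_sum_shift[OF t] by (simp add: sum_distrib_left[symmetric])
      finally show ?thesis .
    qed
    have s2: "(\<Sum>u\<in>Fq. eta q (l * u) * eta q (\<kappa> * (t - u))) = eta q (l * \<kappa>) * (eta q (-1::'f) * nu t)"
    proof -
      have "(\<Sum>u\<in>Fq. eta q (l * u) * eta q (\<kappa> * (t - u))) = (\<Sum>u\<in>Fq. eta q (l * \<kappa>) * eta q (u * (t - u)))"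
      proof (intro sum.cong refl)
        fix u assume u: "u \<in> Fq"
        have "eta q (l * u) * eta q (\<kappa> * (t - u)) = eta q (l * u * (\<kappa> * (t - u)))"
          by (rule eta_mult[symmetric]) (auto intro: GF_mult l \<kappa> u tu)
        also have "l * u * (\<kappa> * (t - u)) = (l * \<kappa>) * (u * (t - u))" by (simp add: algebra_simps)
        also have "eta q \<dots> = eta q (l * \<kappa>) * eta q (u * (t - u))"
          by (rule eta_mult) (auto intro: GF_mult l \<kappa> u tu)
        finally show "eta q (l * u) * eta q (\<kappa> * (t - u)) = eta q (l * \<kappa>) * eta q (u * (t - u))" .
      qed
      also have "\<dots> = eta q (l * \<kappa>) * (eta q (-1::'f) * nu t)"
        using jacobi[OF t] by (simp add: sum_distrib_left[symmetric])
      finally show ?thesis .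
    qed
    have k1: "k \<ge> 1" using False by (cases k) auto
    have "int (Dc lam (Suc k) t) = (\<Sum>u\<in>Fq. (1 + eta q (l * u)) * (int q ^ (k - 1) + d * eta q (\<kappa> * (t - u))))"
      unfolding rec
    proof (intro sum.cong refl)
      fix u assume u: "u \<in> Fq"
      show "(1 + eta q (l * u)) * int (Dc lam k (t - u)) = (1 + eta q (l * u)) * (int q ^ (k - 1) + d * eta q (\<kappa> * (t - u)))"
        by (simp only: IHo[OF u])
    qed
    also have "\<dots> = (\<Sum>u\<in>Fq. int q ^ (k - 1)) + int q ^ (k - 1) * (\<Sum>u\<in>Fq. eta q (l * u))
        + d * (\<Sum>u\<in>Fq. eta q (\<kappa> * (t - u))) + d * (\<Sum>u\<in>Fq. eta q (l * u) * eta q (\<kappa> * (t - u)))"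
      by (simp add: sum.distrib sum_distrib_left algebra_simps)
    also have "\<dots> = int q * int q ^ (k - 1) + d * (eta q (l * \<kappa>) * (eta q (-1::'f) * nu t))"
      using card_GFq eta_sum_scaled[OF l(1)] s1 s2 by simp
    finally have D: "int (Dc lam (Suc k) t) = int q * int q ^ (k - 1) + d * (eta q (l * \<kappa>) * (eta q (-1::'f) * nu t))" .
    have sk: "Suc k div 2 = Suc ((k - 1) div 2)" using False k1 by presburger
    have e: "eta q ((-1) ^ (Suc k div 2) * (\<Delta> * l)) = eta q (l * \<kappa>) * eta q (-1::'f)"
    proof -
      have "(-1::'f) ^ (Suc k div 2) * (\<Delta> * l) = (l * \<kappa>) * (-1)"
        unfolding sk \<kappa>_def by (simp add: algebra_simps)
      moreover have "eta q ((l * \<kappa>) * (-1)) = eta q (l * \<kappa>) * eta q (-1::'f)"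
        by (rule eta_mult) (auto intro: GF_mult l \<kappa> GF_uminus)
      ultimately show ?thesis by metis
    qed
    have qk: "int q * int q ^ (k - 1) = int q ^ k" using k1 by (cases k) auto
    show ?thesis using False D e \<Delta>S sk qk d_def by (simp add: algebra_simps)
  qed
qed

end


lemma pow_gcd_one:
  fixes x :: "'a::field"
  assumes "x ^ a = 1" "x ^ b = 1" "a \<noteq> 0"
  shows "x ^ gcd a b = 1"
proof -
  obtain u v where uv: "a * u = b * v + gcd a b" using bezout_nat[OF assms(3)] by blast
  have "1 = x ^ (a * u)" using assms(1) by (simp add: power_mult)
  also have "\<dots> = x ^ (b * v) * x ^ gcd a b" using uv by (simp add: power_add)
  also have "x ^ (b * v) = 1" using assms(2) by (simp add: power_mult)
  finally show ?thesis by simp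
qed

locale ffcode = ffq p L TY m for p L :: nat and TY :: "'f::{field,finite} itself" and m :: nat +
  fixes N :: nat and \<theta> :: 'f
  assumes N_pos: "N > 0" and N_dvd: "N dvd p - 1"
    and N_coprime: "coprime N ((p ^ m - 1) div (p - 1))"
    and theta_in: "\<theta> \<in> GF (p ^ m)"
    and theta_root: "\<theta> ^ ((p ^ m - 1) div N) = 1"
    and theta_prim: "\<forall>k. 0 < k \<and> k < (p ^ m - 1) div N \<longrightarrow> \<theta> ^ k \<noteq> 1"
begin

abbreviation "K \<equiv> (q - 1) div N"

lemma pm1_dvd: "(p - 1) dvd (q - 1)"
proof -
  have "int p ^ m - 1 = (int p - 1) * (\<Sum>i<m. int p ^ i)" by (rule power_diff_1_eq)
  then have "int (p - 1) dvd int (q - 1)" using p_ge2 q_ge3 by (simp add: of_nat_diff)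
  then show ?thesis by (simp only: int_dvd_int_iff)
qed

lemma N_dvd_q: "N dvd q - 1" using N_dvd pm1_dvd dvd_trans by blast

lemma KN: "K * N = q - 1" using N_dvd_q by simp

lemma K_pos: "K \<ge> 1" using KN q_ge3 by (cases K) auto

lemma theta_nz: "\<theta> \<noteq> 0" using theta_root K_pos by (cases K) auto

lemma theta_inj: "i < K \<Longrightarrow> j < K \<Longrightarrow> \<theta> ^ i = \<theta> ^ j \<Longrightarrow> i = j"
proof (rule ccontr)
  assume ij: "i < K" "j < K" "\<theta> ^ i = \<theta> ^ j" "i \<noteq> j"
  show False
  proof (cases "i < j")
    case True
    have "\<theta> ^ j = \<theta> ^ i * \<theta> ^ (j - i)" using True by (simp add: power_add[symmetric])
    then have "\<theta> ^ (j - i) = 1" using ij(3) theta_nz by simp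
    then show False using theta_prim True ij by auto
  next
    case False
    then have ji: "j < i" using ij by simp
    have "\<theta> ^ i = \<theta> ^ j * \<theta> ^ (i - j)" using ji by (simp add: power_add[symmetric])
    then have "\<theta> ^ (i - j) = 1" using ij(3) theta_nz by simp
    then show False using theta_prim ji ij by auto
  qed
qed

lemma H_eq: "{x::'f. x ^ K = 1} = (\<lambda>i. \<theta> ^ i) ` {..<K}"
proof -
  have sub: "(\<lambda>i. \<theta> ^ i) ` {..<K} \<subseteq> {x::'f. x ^ K = 1}"
  proof
    fix x assume "x \<in> (\<lambda>i. \<theta> ^ i) ` {..<K}"
    then obtain i where "x = \<theta> ^ i" by auto
    then have "x ^ K = (\<theta> ^ K) ^ i" by (simp add: power_mult[symmetric] mult.commute)
    then show "x \<in> {x. x ^ K = 1}" using theta_root by simp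
  qed
  have "card ((\<lambda>i. \<theta> ^ i) ` {..<K}) = K"
    by (subst card_image) (auto simp: inj_on_def intro: theta_inj)
  moreover have "card {x::'f. x ^ K = 1} \<le> K" by (rule roots_xn_minus_1[OF K_pos])
  moreover have "card ((\<lambda>i. \<theta> ^ i) ` {..<K}) \<le> card {x::'f. x ^ K = 1}" using sub by (intro card_mono) auto
  ultimately show ?thesis using sub by (intro card_subset_eq[symmetric]) auto
qed

definition Pstar :: "'f set" where "Pstar = GF p - {0}"

lemma GFp_sub: "GF p \<subseteq> (GF q :: 'f set)"
  using GF_sub[of 1 m] by simp

lemma card_Pstar: "card Pstar = p - 1"
  unfolding Pstar_def using card_GF[of 1] GF_0[of 1] by (simp add: card_Diff_singleton)

lemma Pstar_Gs: "Pstar \<subseteq> Gs" unfolding Pstar_def Gs_def using GFp_sub by auto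

lemma Pstar_pow: "a \<in> Pstar \<Longrightarrow> a ^ (p - 1) = 1"
proof -
  assume a: "a \<in> Pstar"
  then have "a ^ p = a" "a \<noteq> 0" unfolding Pstar_def GF_def by auto
  moreover have "p = Suc (p - 1)" using p_ge2 by simp
  ultimately have "a * a ^ (p - 1) = a * 1" by (metis power_Suc mult_1_right)
  then show ?thesis using \<open>a \<noteq> 0\<close> by simp
qed

lemma gcd_K: "gcd K (p - 1) = (p - 1) div N"
proof -
  define S where "S = (q - 1) div (p - 1)"
  define g where "g = (p - 1) div N"
  have qS: "q - 1 = (p - 1) * S" unfolding S_def using pm1_dvd by simp
  have pg: "p - 1 = g * N" unfolding g_def using N_dvd by simp
  have Kg: "K = g * S" using qS pg N_pos by simp
  have "gcd K (p - 1) = g * gcd S N" using Kg pg gcd_mult_distrib_nat by simp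
  moreover have "coprime N S" using N_coprime S_def by simp
  ultimately show ?thesis unfolding g_def by (simp add: coprime_iff_gcd_eq_1 gcd.commute)
qed

lemma fiberP:
  assumes z: "z \<in> Gs"
  shows "card {a\<in>Pstar. a ^ K = z ^ K} = (p - 1) div N"
proof -
  let ?T = "\<lambda>a::'f. a ^ K"
  let ?S = "{x::'f. x ^ N = 1}"
  have P0: "0 \<notin> Pstar" unfolding Pstar_def by simp
  have Pm: "x * y \<in> Pstar" if "x \<in> Pstar" "y \<in> Pstar" for x y
    using that unfolding Pstar_def by (auto intro: GF_mult)
  have Pi: "inverse x \<in> Pstar" if "x \<in> Pstar" for x
    using that unfolding Pstar_def by (auto intro: GF_inverse)
  have fib: "card {x\<in>Pstar. ?T x = y} = card {x\<in>Pstar. ?T x = 1}" if "y \<in> ?T ` Pstar" for y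
    by (rule mult_hom_fiber[OF P0 Pm Pi _ that]) (use P0 in \<open>auto simp: power_mult_distrib\<close>)
  have sub: "?T ` Pstar \<subseteq> ?S"
  proof
    fix y assume "y \<in> ?T ` Pstar"
    then obtain a where a: "a \<in> Pstar" "y = a ^ K" by auto
    have "y ^ N = a ^ (K * N)" using a by (simp add: power_mult)
    also have "\<dots> = 1" using KN a Pstar_Gs GFq_unit unfolding Gs_def by auto
    finally show "y \<in> ?S" by simp
  qed
  have cS: "card ?S = N" by (rule card_roots_unity[OF N_dvd_q]) (use N_pos in simp)
  have g: "(p - 1) div N * N = p - 1" using N_dvd by simp
  have kb: "card {x\<in>Pstar. ?T x = 1} \<le> (p - 1) div N"
  proof -
    have "{x\<in>Pstar. ?T x = 1} \<subseteq> {x. x ^ gcd K (p - 1) = 1}"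
      using pow_gcd_one[of _ K "p - 1"] Pstar_pow K_pos by auto
    moreover have "card {x::'f. x ^ gcd K (p - 1) = 1} \<le> gcd K (p - 1)"
      by (rule roots_xn_minus_1) (use K_pos in \<open>simp add: Suc_le_eq\<close>)
    ultimately show ?thesis using gcd_K by (metis (no_types, lifting) card_mono finite order_trans)
  qed
  have ne: "Pstar \<noteq> {}" unfolding Pstar_def using GF_1[of 1] by auto
  have cP: "card Pstar = card ?S * ((p - 1) div N)" using card_Pstar cS g by (simp add: mult.commute)
  have res: "card {x\<in>Pstar. ?T x = 1} = (p - 1) div N \<and> ?T ` Pstar = ?S"
    by (rule fiber_count_gen[OF _ _ sub fib cP kb ne]) auto
  have "z ^ K \<in> ?S"
  proof -
    have "(z ^ K) ^ N = z ^ (K * N)" by (simp add: power_mult)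
    also have "\<dots> = 1" using KN z GFq_unit unfolding Gs_def by auto
    finally show ?thesis by simp
  qed
  then have "z ^ K \<in> ?T ` Pstar" using res by simp
  then show ?thesis using fib res by simp
qed

lemma fiber_ai:
  assumes z: "z \<in> Gs"
  shows "card {(a, i). a \<in> Pstar \<and> i < K \<and> a * \<theta> ^ i = z} = (p - 1) div N"
proof -
  let ?A = "{(a, i). a \<in> Pstar \<and> i < K \<and> a * \<theta> ^ i = z}"
  have inj: "inj_on fst ?A"
  proof (rule inj_onI)
    fix x y assume x: "x \<in> ?A" and y: "y \<in> ?A" and e: "fst x = fst y"
    obtain a i where ai: "x = (a, i)" "a \<in> Pstar" "i < K" "a * \<theta> ^ i = z" using x by auto
    obtain b j where bj: "y = (b, j)" "b \<in> Pstar" "j < K" "b * \<theta> ^ j = z" using y by auto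
    have ab: "a = b" using e ai bj by simp
    have "a \<noteq> 0" using ai Pstar_def by auto
    moreover have "a * \<theta> ^ i = a * \<theta> ^ j" using ai(4) bj(4) ab by simp
    ultimately have "\<theta> ^ i = \<theta> ^ j" by simp
    then have "i = j" using theta_inj ai bj by blast
    then show "x = y" using ai bj ab by simp
  qed
  have im: "fst ` ?A = {a\<in>Pstar. a ^ K = z ^ K}"
  proof (intro equalityI subsetI)
    fix a assume "a \<in> fst ` ?A"
    then obtain i where ai: "a \<in> Pstar" "i < K" "a * \<theta> ^ i = z" by force
    have "z ^ K = a ^ K * (\<theta> ^ K) ^ i" using ai(3)
      by (metis power_mult power_mult_distrib mult.commute)
    then show "a \<in> {a\<in>Pstar. a ^ K = z ^ K}" using ai theta_root by simp
  next
    fix a assume a: "a \<in> {a\<in>Pstar. a ^ K = z ^ K}"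
    then have anz: "a \<noteq> 0" and aP: "a \<in> Pstar" unfolding Pstar_def by auto
    have znz: "z \<noteq> 0" using z Gs_def by auto
    have "(z / a) ^ K = 1" using a anz znz by (simp add: power_divide)
    then have "z / a \<in> (\<lambda>i. \<theta> ^ i) ` {..<K}" using H_eq by blast
    then obtain i where i: "i < K" "z / a = \<theta> ^ i" by auto
    then have "a * \<theta> ^ i = a * (z / a)" by simp
    then have "a * \<theta> ^ i = z" using anz by simp
    then have "(a, i) \<in> ?A" using aP i by simp
    then show "a \<in> fst ` ?A" by force
  qed
  have "card ?A = card (fst ` ?A)" using card_image[OF inj] by simp
  then show ?thesis using im fiberP[OF z] by simp
qed

lemma tr_zero_count:
  assumes g: "g \<in> Gs"
  shows "card {z\<in>Fq. tr p m (g * z) = 0} = p ^ (m - 1)"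
proof -
  have gG: "g \<in> Fq" "g \<noteq> 0" using g Gs_def by auto
  have im: "(\<lambda>z. g * z) ` {z\<in>Fq. tr p m (g * z) = 0} = {x\<in>Fq. tr p m x = 0}"
  proof (intro equalityI subsetI)
    fix x assume "x \<in> (\<lambda>z. g * z) ` {z\<in>Fq. tr p m (g * z) = 0}"
    then show "x \<in> {x\<in>Fq. tr p m x = 0}" using gG by (auto intro: GF_mult)
  next
    fix x assume x: "x \<in> {x\<in>Fq. tr p m x = 0}"
    then have "x / g \<in> {z\<in>Fq. tr p m (g * z) = 0}" "x = g * (x / g)" using gG by (auto intro: GF_divide)
    then show "x \<in> (\<lambda>z. g * z) ` {z\<in>Fq. tr p m (g * z) = 0}" by blast
  qed
  have "card {z\<in>Fq. tr p m (g * z) = 0} = card ((\<lambda>z. g * z) ` {z\<in>Fq. tr p m (g * z) = 0})"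
    by (rule card_image[symmetric]) (use gG in \<open>auto simp: inj_on_def\<close>)
  also have "\<dots> = card {x\<in>Fq. tr p m x = 0}" using im by simp
  also have "\<dots> = p ^ (m - 1)" using tr_fiber[of 1 m 0] m_pos m_dvd GF_0[of 1] by simp
  finally show ?thesis .
qed

lemma tr0: "tr n s (0::'f) = 0" if "n > 0"
proof -
  have h: "(0::'f) ^ (n ^ i) = 0" for i
  proof -
    have "n ^ i > 0" using that by simp
    then show ?thesis by (simp add: zero_power)
  qed
  show ?thesis unfolding tr_def by (simp only: h sum.neutral_const)
qed

definition wpsi :: "'f \<Rightarrow> nat" where
  "wpsi g = card {i\<in>{..<K}. tr p m (g * \<theta> ^ i) \<noteq> 0}"

lemma wpsi_scal: "a \<in> Pstar \<Longrightarrow> wpsi (a * g) = wpsi g"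
proof -
  assume a: "a \<in> Pstar"
  then have aG: "a \<in> GF (p ^ 1)" "a \<noteq> 0" unfolding Pstar_def by auto
  have "tr p m (a * g * \<theta> ^ i) = a * tr p m (g * \<theta> ^ i)" for i
    using tr_scal[OF aG(1), of m "g * \<theta> ^ i"] by (simp add: mult.assoc)
  then show ?thesis unfolding wpsi_def using aG by simp
qed

lemma wpsi_val:
  assumes g: "g \<in> Gs"
  shows "N * wpsi g = (p - 1) * p ^ (m - 1)"
proof -
  let ?A = "{(a, i). a \<in> Pstar \<and> i < K \<and> tr p m (g * (a * \<theta> ^ i)) \<noteq> 0}"
  let ?c = "(p - 1) div N"
  have finA: "finite ?A"
    by (rule finite_subset[of _ "Pstar \<times> {..<K}"]) auto
  have "(p - 1) * wpsi g = (\<Sum>a\<in>Pstar. wpsi (a * g))" using wpsi_scal card_Pstar by simp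
  also have "\<dots> = (\<Sum>a\<in>Pstar. card {i\<in>{..<K}. tr p m (g * (a * \<theta> ^ i)) \<noteq> 0})"
    unfolding wpsi_def by (intro sum.cong refl) (simp add: algebra_simps)
  also have "\<dots> = card (SIGMA a:Pstar. {i\<in>{..<K}. tr p m (g * (a * \<theta> ^ i)) \<noteq> 0})"
    by (subst card_SigmaI) auto
  also have "(SIGMA a:Pstar. {i\<in>{..<K}. tr p m (g * (a * \<theta> ^ i)) \<noteq> 0}) = ?A" by auto
  also have "card ?A = (\<Sum>z\<in>Gs. card {x\<in>?A. (\<lambda>(a, i). a * \<theta> ^ i) x = z})"
  proof -
    have sub: "(\<lambda>(a, i). a * \<theta> ^ i) ` ?A \<subseteq> Gs"
    proof
      fix z assume "z \<in> (\<lambda>(a, i). a * \<theta> ^ i) ` ?A"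
      then obtain a i where "a \<in> Pstar" "z = a * \<theta> ^ i" by auto
      then show "z \<in> Gs" using Pstar_Gs theta_nz theta_in unfolding Gs_def by (auto intro: GF_mult GF_power)
    qed
    show ?thesis
      using sum.group[OF finA _ sub, where h="\<lambda>_. 1::nat"] by simp
  qed
  also have "\<dots> = (\<Sum>z\<in>Gs. if tr p m (g * z) \<noteq> 0 then ?c else 0)"
  proof (intro sum.cong refl)
    fix z assume z: "z \<in> Gs"
    show "card {x\<in>?A. (\<lambda>(a, i). a * \<theta> ^ i) x = z} = (if tr p m (g * z) \<noteq> 0 then ?c else 0)"
    proof (cases "tr p m (g * z) \<noteq> 0")
      case True
      then have "{x\<in>?A. (\<lambda>(a, i). a * \<theta> ^ i) x = z} = {(a, i). a \<in> Pstar \<and> i < K \<and> a * \<theta> ^ i = z}"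
        by auto
      then show ?thesis using fiber_ai[OF z] True by simp
    next
      case False
      have E0: "{x\<in>?A. (\<lambda>(a, i). a * \<theta> ^ i) x = z} = {}" using False by auto
      show ?thesis unfolding E0 using False by simp
    qed
  qed
  also have "\<dots> = (\<Sum>z\<in>{z\<in>Gs. tr p m (g * z) \<noteq> 0}. ?c)"
    by (rule sum.inter_filter[symmetric]) (simp add: Gs_def)
  also have "\<dots> = ?c * card {z\<in>Gs. tr p m (g * z) \<noteq> 0}" by simp
  also have "card {z\<in>Gs. tr p m (g * z) \<noteq> 0} = q - p ^ (m - 1)"
  proof -
    have e: "{z\<in>Gs. tr p m (g * z) \<noteq> 0} = Fq - {z\<in>Fq. tr p m (g * z) = 0}"
      unfolding Gs_def using tr0[of p m] p_ge2 by auto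
    show ?thesis unfolding e using tr_zero_count[OF g] card_GFq
      by (subst card_Diff_subset) auto
  qed
  finally have E: "(p - 1) * wpsi g = ?c * (q - p ^ (m - 1))" .
  have qm: "q - p ^ (m - 1) = (p - 1) * p ^ (m - 1)"
  proof -
    have "q = p * p ^ (m - 1)" using m_pos by (cases m) auto
    then show ?thesis by (simp add: algebra_simps)
  qed
  have cN: "?c * N = p - 1" using N_dvd by simp
  have "(p - 1) * (N * wpsi g) = (p - 1) * ((p - 1) * p ^ (m - 1))"
    using E qm cN by (metis mult.assoc mult.commute)
  then show ?thesis using p_ge2 by simp
qed

end


context ffq begin

lemma Dc_cong: "(\<And>i. i < k \<Longrightarrow> \<mu> i = \<mu>' i) \<Longrightarrow> Dc \<mu> k t = Dc \<mu>' k t"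
  unfolding Dc_def by (rule arg_cong[where f=card]) (auto intro!: Collect_cong sum.cong)

lemma Dc_zero_step: "\<mu> k = 0 \<Longrightarrow> Dc \<mu> (Suc k) t = q * Dc \<mu> k t"
proof -
  assume "\<mu> k = 0"
  then have "int (Dc \<mu> (Suc k) t) = int (q * Dc \<mu> k t)" using Dc_Suc[of \<mu> k t] card_GFq by simp
  then show ?thesis by (simp only: of_nat_eq_iff)
qed

lemma Dc_ext: "(\<And>i. i \<ge> r \<Longrightarrow> \<mu> i = 0) \<Longrightarrow> Dc \<mu> (r + j) t = q ^ j * Dc \<mu> r t"
  by (induction j) (auto simp: Dc_zero_step)

end

locale ffmain = ffcode p L TY m N \<theta> for p L :: nat and TY :: "'f::{field,finite} itself" and m N :: nat and \<theta> :: 'f +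
  fixes m1 m2 :: nat and Q :: "'f \<Rightarrow> 'f" and e lam :: "nat \<Rightarrow> 'f" and r :: nat
  assumes m1_pos: "m1 \<ge> 1" and m2_pos: "m2 \<ge> 1"
    and m1_dvd: "m * m1 dvd L" and m2_dvd: "m * m2 dvd L"
    and Q_diag: "qf_diagonal (p ^ m) m1 Q e lam r"
    and r_le: "r \<le> m1"
    and Q_nonzero: "\<exists>x\<in>GF ((p ^ m) ^ m1). Q x \<noteq> 0"
begin

abbreviation X :: "'f set" where "X \<equiv> GF (q ^ m1)"
abbreviation Y :: "'f set" where "Y \<equiv> GF (q ^ m2)"

abbreviation phi :: "(nat \<Rightarrow> 'f) \<Rightarrow> 'f" where "phi v \<equiv> (\<Sum>i<m1. v i * e i)"
abbreviation PV :: "(nat \<Rightarrow> 'f) set" where "PV \<equiv> PiE {..<m1} (\<lambda>_. GF q)"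

lemma diag: "bij_betw phi PV X \<and> (\<forall>i<r. lam i \<in> Fq - {0}) \<and> (\<forall>v\<in>PV. Q (phi v) = (\<Sum>i<r. lam i * v i ^ 2))"
  using Q_diag unfolding qf_diagonal_def .
lemma phi_bij: "bij_betw phi PV X" using conjunct1[OF diag] .
lemma lam_ok: "i < r \<Longrightarrow> lam i \<in> Fq \<and> lam i \<noteq> 0"
proof -
  assume "i < r"
  then have "lam i \<in> Fq - {0}" using conjunct1[OF conjunct2[OF diag]] by simp
  then show ?thesis by simp
qed
lemma Q_phi: "v \<in> PV \<Longrightarrow> Q (phi v) = (\<Sum>i<r. lam i * v i ^ 2)"
  using conjunct2[OF conjunct2[OF diag]] by (rule bspec)

lemma X_eq: "X = GF (p ^ (m * m1))" by (simp only: power_mult)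
lemma Y_eq: "Y = GF (p ^ (m * m2))" by (simp only: power_mult)

lemma card_X: "card X = q ^ m1" using card_GF[OF m1_dvd] unfolding power_mult .
lemma card_Y: "card Y = q ^ m2" using card_GF[OF m2_dvd] unfolding power_mult .

lemma Fq_sub_X: "Fq \<subseteq> X" using GF_sub[of m m1] unfolding power_mult .
lemma Fq_sub_Y: "Fq \<subseteq> Y" using GF_sub[of m m2] unfolding power_mult .

lemma Q_in: "x \<in> X \<Longrightarrow> Q x \<in> Fq"
proof -
  assume "x \<in> X"
  then obtain v where v: "v \<in> PV" "x = phi v" using phi_bij by (auto simp: bij_betw_def)
  have "(\<Sum>i<r. lam i * v i ^ 2) \<in> Fq"
    using lam_ok v(1) r_le by (intro GF_sum GF_mult GF_power) (auto simp: PiE_iff)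
  then show ?thesis using Q_phi[OF v(1)] v(2) by simp
qed

lemma Q0: "Q 0 = 0"
proof -
  let ?v = "\<lambda>i. if i < m1 then (0::'f) else undefined"
  have v: "?v \<in> PV" by (auto simp: PiE_iff extensional_def)
  have "phi ?v = 0" by simp
  then show ?thesis using Q_phi[OF v] r_le by simp
qed

lemma r_pos: "r \<ge> 1"
proof (rule ccontr)
  assume "\<not> r \<ge> 1"
  then have r0: "r = 0" by simp
  obtain x where x: "x \<in> GF ((p ^ m) ^ m1)" "Q x \<noteq> 0" using Q_nonzero by auto
  then obtain v where v: "v \<in> PV" "x = phi v" using phi_bij by (auto simp: bij_betw_def)
  then show False using Q_phi[OF v(1)] r0 x by simp
qed

definition lam' :: "nat \<Rightarrow> 'f" where "lam' i = (if i < r then lam i else 0)"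

definition NQ :: "'f \<Rightarrow> nat" where "NQ t = card {x\<in>X. Q x = t}"

lemma NQ_Dc: "NQ t = Dc lam' m1 t"
proof -
  have inj: "inj_on phi PV" using phi_bij by (simp add: bij_betw_def)
  have img: "phi ` {v\<in>PV. (\<Sum>i<m1. lam' i * v i ^ 2) = t} = {x\<in>X. Q x = t}"
  proof -
    have s: "(\<Sum>i<m1. lam' i * v i ^ 2) = (\<Sum>i<r. lam i * v i ^ 2)" for v :: "nat \<Rightarrow> 'f"
    proof -
      have "(\<Sum>i<m1. lam' i * v i ^ 2) = (\<Sum>i<r. lam' i * v i ^ 2)"
        using r_le by (intro sum.mono_neutral_right) (auto simp: lam'_def)
      also have "\<dots> = (\<Sum>i<r. lam i * v i ^ 2)" by (intro sum.cong) (auto simp: lam'_def)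
      finally show ?thesis .
    qed
    show ?thesis
    proof (intro equalityI subsetI)
      fix x assume "x \<in> phi ` {v\<in>PV. (\<Sum>i<m1. lam' i * v i ^ 2) = t}"
      then obtain v where "v \<in> PV" "(\<Sum>i<m1. lam' i * v i ^ 2) = t" "x = phi v" by auto
      then show "x \<in> {x\<in>X. Q x = t}" using Q_phi s phi_bij by (auto simp: bij_betw_def)
    next
      fix x assume x: "x \<in> {x\<in>X. Q x = t}"
      then obtain v where v: "v \<in> PV" "x = phi v" using phi_bij by (auto simp: bij_betw_def)
      then show "x \<in> phi ` {v\<in>PV. (\<Sum>i<m1. lam' i * v i ^ 2) = t}" using x Q_phi s by auto
    qed
  qed
  have "NQ t = card (phi ` {v\<in>PV. (\<Sum>i<m1. lam' i * v i ^ 2) = t})" unfolding NQ_def img ..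
  also have "\<dots> = card {v\<in>PV. (\<Sum>i<m1. lam' i * v i ^ 2) = t}"
    by (rule card_image) (rule inj_on_subset[OF inj], auto)
  finally show ?thesis unfolding Dc_def .
qed

lemma NQ_Dc_r: "NQ t = q ^ (m1 - r) * Dc lam r t"
proof -
  have "Dc lam' (r + (m1 - r)) t = q ^ (m1 - r) * Dc lam' r t"
    by (rule Dc_ext) (simp add: lam'_def)
  moreover have "Dc lam' r t = Dc lam r t" by (rule Dc_cong) (simp add: lam'_def)
  ultimately show ?thesis using NQ_Dc r_le by simp
qed

abbreviation "\<Delta> \<equiv> (\<Prod>i<r. lam i)"

lemma NQ_even:
  assumes "even r" "t \<in> Fq"
  shows "int q * int (NQ t) = int q ^ (m1 - r) * (int q ^ r + nu t * int q ^ (r div 2) * eta q ((-1) ^ (r div 2) * \<Delta>))"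
proof -
  have D: "int q * int (Dc lam r t) = int q ^ r + nu t * int q ^ (r div 2) * eta q ((-1) ^ (r div 2) * \<Delta>)"
    by (rule mp[OF conjunct1[OF Dc_formula[of r lam r t, OF lam_ok order_refl assms(2)]] assms(1)])
  have "int q * int (NQ t) = int q ^ (m1 - r) * (int q * int (Dc lam r t))"
    unfolding NQ_Dc_r by (simp only: of_nat_mult of_nat_power mult.assoc mult.left_commute)
  then show ?thesis unfolding D .
qed

lemma NQ_odd:
  assumes "odd r" "t \<in> Fq"
  shows "int (NQ t) = int q ^ (m1 - r) * (int q ^ (r - 1) + int q ^ ((r - 1) div 2) * eta q ((-1) ^ ((r - 1) div 2) * \<Delta> * t))"
proof -
  have D: "int (Dc lam r t) = int q ^ (r - 1) + int q ^ ((r - 1) div 2) * eta q ((-1) ^ ((r - 1) div 2) * \<Delta> * t)"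
    by (rule mp[OF conjunct2[OF Dc_formula[of r lam r t, OF lam_ok order_refl assms(2)]] assms(1)])
  have "int (NQ t) = int q ^ (m1 - r) * int (Dc lam r t)"
    unfolding NQ_Dc_r by (simp only: of_nat_mult of_nat_power)
  then show ?thesis unfolding D .
qed

end


context ffmain begin

definition gam :: "'f \<Rightarrow> 'f \<Rightarrow> 'f \<Rightarrow> 'f \<Rightarrow> 'f \<Rightarrow> 'f" where
  "gam a b c x y = a * Q x + tr q m2 (b * y) + c"

definition Zc :: "'f \<Rightarrow> 'f \<Rightarrow> 'f \<Rightarrow> nat" where
  "Zc a b c = card {(x, y). x \<in> X \<and> y \<in> Y \<and> gam a b c x y = 0}"

lemma tr_Y: "y \<in> Y \<Longrightarrow> tr q m2 y \<in> Fq" using tr_in_GF[of y m m2] by simp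

lemma gam_in: "a \<in> Fq \<Longrightarrow> b \<in> Y \<Longrightarrow> c \<in> Fq \<Longrightarrow> x \<in> X \<Longrightarrow> y \<in> Y \<Longrightarrow> gam a b c x y \<in> Fq"
  unfolding gam_def by (intro GF_add GF_mult Q_in tr_Y) (auto intro: GF_mult)

lemma card_pairs: "card {(x, y). x \<in> X \<and> y \<in> Y \<and> P x y} = (\<Sum>x\<in>X. card {y\<in>Y. P x y})"
proof -
  have "{(x, y). x \<in> X \<and> y \<in> Y \<and> P x y} = (SIGMA x:X. {y\<in>Y. P x y})" by auto
  then show ?thesis by (simp add: card_SigmaI)
qed

lemma Z_bnz:
  assumes a: "a \<in> Fq" and b: "b \<in> Y" "b \<noteq> 0" and c: "c \<in> Fq"
  shows "Zc a b c = q ^ m1 * q ^ (m2 - 1)"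
proof -
  have fib: "card {y\<in>Y. gam a b c x y = 0} = q ^ (m2 - 1)" if x: "x \<in> X" for x
  proof -
    define v where "v = - (a * Q x + c)"
    have v: "v \<in> Fq" unfolding v_def using a c Q_in[OF x] by (intro GF_uminus GF_add GF_mult)
    have e: "{y\<in>Y. gam a b c x y = 0} = {y\<in>Y. tr q m2 (b * y) = v}"
      unfolding gam_def v_def by (auto simp: algebra_simps eq_neg_iff_add_eq_0)
    have im: "(\<lambda>y. b * y) ` {y\<in>Y. tr q m2 (b * y) = v} = {z\<in>Y. tr q m2 z = v}"
    proof (intro equalityI subsetI)
      fix z assume "z \<in> (\<lambda>y. b * y) ` {y\<in>Y. tr q m2 (b * y) = v}"
      then show "z \<in> {z\<in>Y. tr q m2 z = v}" using b by (auto intro: GF_mult)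
    next
      fix z assume z: "z \<in> {z\<in>Y. tr q m2 z = v}"
      then have "z / b \<in> {y\<in>Y. tr q m2 (b * y) = v}" "z = b * (z / b)" using b by (auto intro: GF_divide)
      then show "z \<in> (\<lambda>y. b * y) ` {y\<in>Y. tr q m2 (b * y) = v}" by blast
    qed
    have "card {y\<in>Y. tr q m2 (b * y) = v} = card ((\<lambda>y. b * y) ` {y\<in>Y. tr q m2 (b * y) = v})"
      by (rule card_image[symmetric]) (use b in \<open>auto simp: inj_on_def\<close>)
    also have "\<dots> = q ^ (m2 - 1)" unfolding im using tr_fiber[OF m_pos m2_pos m2_dvd v] .
    finally show ?thesis unfolding e .
  qed
  have "Zc a b c = (\<Sum>x\<in>X. card {y\<in>Y. gam a b c x y = 0})" unfolding Zc_def by (rule card_pairs)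
  also have "\<dots> = (\<Sum>x\<in>X. q ^ (m2 - 1))" by (intro sum.cong refl) (rule fib)
  also have "\<dots> = q ^ m1 * q ^ (m2 - 1)" using card_X by simp
  finally show ?thesis .
qed

lemma tr_q0: "tr q m2 (0::'f) = 0" using tr0[of q m2] p_ge2 by simp

lemma Z_b0:
  shows "Zc a 0 c = q ^ m2 * card {x\<in>X. a * Q x + c = 0}"
proof -
  have "Zc a 0 c = (\<Sum>x\<in>X. card {y\<in>Y. gam a 0 c x y = 0})" unfolding Zc_def by (rule card_pairs)
  also have "\<dots> = (\<Sum>x\<in>X. if a * Q x + c = 0 then q ^ m2 else 0)"
    by (intro sum.cong refl) (simp add: gam_def tr_q0 card_Y)
  also have "\<dots> = (\<Sum>x\<in>{x\<in>X. a * Q x + c = 0}. q ^ m2)"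
    by (rule sum.inter_filter[symmetric]) simp
  also have "\<dots> = q ^ m2 * card {x\<in>X. a * Q x + c = 0}" by simp
  finally show ?thesis .
qed

lemma Z_000: "Zc 0 0 0 = q ^ m2 * q ^ m1" using Z_b0[of 0 0] card_X by simp

lemma Z_00c: "c \<noteq> 0 \<Longrightarrow> Zc 0 0 c = 0" using Z_b0[of 0 c] by simp

lemma Z_a0c:
  assumes a: "a \<in> Fq" "a \<noteq> 0" and c: "c \<in> Fq"
  shows "Zc a 0 c = q ^ m2 * NQ (- c / a)"
proof -
  have "{x\<in>X. a * Q x + c = 0} = {x\<in>X. Q x = - c / a}"
    using a by (auto simp: field_simps eq_neg_iff_add_eq_0)
  then show ?thesis using Z_b0[of a c] unfolding NQ_def by simp
qed

definition W0 :: nat where "W0 = (p - 1) * p ^ (m - 1) div N"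

lemma wpsi_W0: "g \<in> Gs \<Longrightarrow> wpsi g = W0"
  unfolding W0_def using wpsi_val[of g] N_pos by (metis nonzero_mult_div_cancel_left not_gr0)

lemma wpsi0: "wpsi 0 = 0"
  unfolding wpsi_def using tr0[of p m] p_ge2 by simp

lemma hw_gen:
  assumes finE: "finite E" and G: "\<And>z. z \<in> E \<Longrightarrow> G z \<in> Fq"
  shows "card {j \<in> E \<times> {..<K}. psi p m q N \<theta> (G (fst j)) (snd j) \<noteq> 0} = W0 * card {z\<in>E. G z \<noteq> 0}"
proof -
  have "{j \<in> E \<times> {..<K}. psi p m q N \<theta> (G (fst j)) (snd j) \<noteq> 0}
      = (SIGMA z:E. {i\<in>{..<K}. tr p m (G z * \<theta> ^ i) \<noteq> 0})"
    by (auto simp: psi_def)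
  then have "card {j \<in> E \<times> {..<K}. psi p m q N \<theta> (G (fst j)) (snd j) \<noteq> 0} = (\<Sum>z\<in>E. wpsi (G z))"
    using finE by (simp add: card_SigmaI wpsi_def)
  also have "\<dots> = (\<Sum>z\<in>E. if G z \<noteq> 0 then W0 else 0)"
  proof (intro sum.cong refl)
    fix z assume z: "z \<in> E"
    show "wpsi (G z) = (if G z \<noteq> 0 then W0 else 0)"
    proof (cases "G z = 0")
      case True then show ?thesis by (simp add: wpsi0)
    next
      case False then have "G z \<in> Gs" using G[OF z] unfolding Gs_def by simp
      then show ?thesis using False wpsi_W0 by simp
    qed
  qed
  also have "\<dots> = (\<Sum>z\<in>{z\<in>E. G z \<noteq> 0}. W0)" by (rule sum.inter_filter[symmetric, OF finE])
  also have "\<dots> = W0 * card {z\<in>E. G z \<noteq> 0}" by simp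
  finally show ?thesis .
qed

definition cwC :: "'f \<Rightarrow> 'f \<Rightarrow> ('f \<times> 'f) \<times> nat \<Rightarrow> 'f" where
  "cwC a b = (\<lambda>((x, y), i). if ((x, y), i) \<in> pos_C q m1 m2 N
        then psi p m q N \<theta> (a * Q x + tr q m2 (b * y)) i else 0)"

definition cwC' :: "'f \<Rightarrow> 'f \<Rightarrow> 'f \<Rightarrow> ('f \<times> 'f) \<times> nat \<Rightarrow> 'f" where
  "cwC' a b c = (\<lambda>((x, y), i). if ((x, y), i) \<in> pos_C' q m1 m2 N
        then psi p m q N \<theta> (a * Q x + tr q m2 (b * y) + c) i else 0)"

lemma code_C_eq: "code_C p m q m1 m2 N \<theta> Q = (\<lambda>(a, b). cwC a b) ` (Fq \<times> Y)"
  unfolding code_C_def cwC_def by simp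

lemma code_C'_eq: "code_C' p m q m1 m2 N \<theta> Q = (\<lambda>(a, b, c). cwC' a b c) ` (Fq \<times> Y \<times> Fq)"
  unfolding code_C'_def cwC'_def by simp

lemma finXY: "finite (X \<times> Y)" by simp

lemma card_XY: "card (X \<times> Y) = q ^ m1 * q ^ m2" using card_X card_Y by (simp add: card_cartesian_product)

lemma hw_C:
  assumes a: "a \<in> Fq" and b: "b \<in> Y"
  shows "hweight (pos_C q m1 m2 N) (cwC a b) = W0 * (q ^ m1 * q ^ m2 - Zc a b 0)"
proof -
  let ?E = "X \<times> Y - {(0, 0)}"
  let ?G = "\<lambda>z. a * Q (fst z) + tr q m2 (b * snd z)"
  have G: "?G z \<in> Fq" if "z \<in> ?E" for z using gam_in[OF a b GF_0] that unfolding gam_def by auto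
  have "{j \<in> pos_C q m1 m2 N. cwC a b j \<noteq> 0} = {j \<in> ?E \<times> {..<K}. psi p m q N \<theta> (?G (fst j)) (snd j) \<noteq> 0}"
    unfolding pos_C_def cwC_def by (auto split: if_splits)
  then have "hweight (pos_C q m1 m2 N) (cwC a b) = W0 * card {z\<in>?E. ?G z \<noteq> 0}"
    unfolding hweight_def using hw_gen[of ?E ?G] G by simp
  also have "{z\<in>?E. ?G z \<noteq> 0} = (X \<times> Y) - {(x, y). x \<in> X \<and> y \<in> Y \<and> gam a b 0 x y = 0}"
    using Q0 tr_q0 unfolding gam_def by auto
  also have "card \<dots> = q ^ m1 * q ^ m2 - Zc a b 0"
    unfolding Zc_def using card_XY by (subst card_Diff_subset) auto
  finally show ?thesis .
qed

lemma hw_C':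
  assumes a: "a \<in> Fq" and b: "b \<in> Y" and c: "c \<in> Fq"
  shows "hweight (pos_C' q m1 m2 N) (cwC' a b c) = W0 * (q ^ m1 * q ^ m2 - Zc a b c)"
proof -
  let ?E = "X \<times> Y"
  let ?G = "\<lambda>z. a * Q (fst z) + tr q m2 (b * snd z) + c"
  have G: "?G z \<in> Fq" if "z \<in> ?E" for z using gam_in[OF a b c] that unfolding gam_def by auto
  have "{j \<in> pos_C' q m1 m2 N. cwC' a b c j \<noteq> 0} = {j \<in> ?E \<times> {..<K}. psi p m q N \<theta> (?G (fst j)) (snd j) \<noteq> 0}"
    unfolding pos_C'_def cwC'_def by auto
  then have "hweight (pos_C' q m1 m2 N) (cwC' a b c) = W0 * card {z\<in>?E. ?G z \<noteq> 0}"
    unfolding hweight_def using hw_gen[of ?E ?G] G by simp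
  also have "{z\<in>?E. ?G z \<noteq> 0} = (X \<times> Y) - {(x, y). x \<in> X \<and> y \<in> Y \<and> gam a b c x y = 0}"
    unfolding gam_def by auto
  also have "card \<dots> = q ^ m1 * q ^ m2 - Zc a b c"
    unfolding Zc_def using card_XY by (subst card_Diff_subset) auto
  finally show ?thesis .
qed

end


context ffmain begin

lemma trp_add: "tr p m ((x::'f) + y) = tr p m x + tr p m y"
  using tr_add[of 1 m x y] by simp

lemma trp_scal: "s \<in> GF p \<Longrightarrow> tr p m ((s::'f) * x) = s * tr p m x"
  using tr_scal[of s 1 m x] by simp

lemma psi_add: "psi p m q N \<theta> (g + g') i = psi p m q N \<theta> g i + psi p m q N \<theta> g' i"
  unfolding psi_def by (simp add: distrib_right trp_add)

lemma psi_scal: "s \<in> GF p \<Longrightarrow> psi p m q N \<theta> (s * g) i = s * psi p m q N \<theta> g i"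
  unfolding psi_def by (simp add: trp_scal mult.assoc)

lemma psi_0: "psi p m q N \<theta> 0 i = 0"
  unfolding psi_def using tr0[of p m] p_ge2 by simp

lemma psi_GFp: "g \<in> Fq \<Longrightarrow> psi p m q N \<theta> g i \<in> GF p"
proof -
  assume g: "g \<in> Fq"
  have "g * \<theta> ^ i \<in> GF ((p ^ 1) ^ m)" using g theta_in by (simp add: GF_mult GF_power)
  then have "tr (p ^ 1) m (g * \<theta> ^ i) \<in> GF (p ^ 1)" by (rule tr_in_GF)
  then show ?thesis unfolding psi_def using GF_0[of 1] by simp
qed

lemma GFp_Fq: "s \<in> GF p \<Longrightarrow> (s::'f) \<in> Fq" using GFp_sub by blast

lemma trq_scal: "s \<in> Fq \<Longrightarrow> tr q m2 ((s::'f) * x) = s * tr q m2 x"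
  by (rule tr_scal)

lemma trq_add: "tr q m2 ((x::'f) + y) = tr q m2 x + tr q m2 y"
  by (rule tr_add)

lemma cwC'_add: "cwC' a b c j + cwC' a' b' c' j = cwC' (a + a') (b + b') (c + c') j"
proof -
  obtain x y i where j: "j = ((x, y), i)" by (metis prod.collapse)
  have "(a + a') * Q x + tr q m2 ((b + b') * y) + (c + c') = (a * Q x + tr q m2 (b * y) + c) + (a' * Q x + tr q m2 (b' * y) + c')"
    by (simp add: distrib_right trq_add algebra_simps)
  then show ?thesis unfolding cwC'_def j by (simp add: psi_add)
qed

lemma cwC'_scal: "s \<in> GF p \<Longrightarrow> s * cwC' a b c j = cwC' (s * a) (s * b) (s * c) j"
proof -
  assume s: "s \<in> GF p"
  obtain x y i where j: "j = ((x, y), i)" by (metis prod.collapse)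
  have "(s * a) * Q x + tr q m2 ((s * b) * y) + (s * c) = s * (a * Q x + tr q m2 (b * y) + c)"
    using trq_scal[OF GFp_Fq[OF s], of "b * y"] by (simp add: algebra_simps)
  then show ?thesis unfolding cwC'_def j using psi_scal[OF s] by simp
qed

lemma cwC_add: "cwC a b j + cwC a' b' j = cwC (a + a') (b + b') j"
proof -
  obtain x y i where j: "j = ((x, y), i)" by (metis prod.collapse)
  have "(a + a') * Q x + tr q m2 ((b + b') * y) = (a * Q x + tr q m2 (b * y)) + (a' * Q x + tr q m2 (b' * y))"
    by (simp add: distrib_right trq_add algebra_simps)
  then show ?thesis unfolding cwC_def j by (simp add: psi_add)
qed

lemma cwC_scal: "s \<in> GF p \<Longrightarrow> s * cwC a b j = cwC (s * a) (s * b) j"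
proof -
  assume s: "s \<in> GF p"
  obtain x y i where j: "j = ((x, y), i)" by (metis prod.collapse)
  have "(s * a) * Q x + tr q m2 ((s * b) * y) = s * (a * Q x + tr q m2 (b * y))"
    using trq_scal[OF GFp_Fq[OF s], of "b * y"] by (simp add: algebra_simps)
  then show ?thesis unfolding cwC_def j using psi_scal[OF s] by simp
qed

lemma cwC_zero: "cwC 0 0 = (\<lambda>_. 0)"
  unfolding cwC_def by (auto simp: tr_q0 Q0 psi_0)

lemma cwC'_zero: "cwC' 0 0 0 = (\<lambda>_. 0)"
  unfolding cwC'_def by (auto simp: tr_q0 Q0 psi_0)

lemma NQ_lt: "t \<in> Fq \<Longrightarrow> NQ t < q ^ m1"
proof -
  assume t: "t \<in> Fq"
  obtain x where x: "x \<in> X" "Q x \<noteq> t"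
  proof (cases "t = 0")
    case True
    then show ?thesis using Q_nonzero that by auto
  next
    case False
    have "(0::'f) \<in> X" using GF_0[of "m * m1"] X_eq by simp
    then show ?thesis using that[of 0] Q0 False by auto
  qed
  have "{x\<in>X. Q x = t} \<subset> X" using x by auto
  then show ?thesis unfolding NQ_def using card_X psubset_card_mono[of X] by simp
qed

lemma Zc_lt:
  assumes a: "a \<in> Fq" and b: "b \<in> Y" and c: "c \<in> Fq" and nz: "(a, b, c) \<noteq> (0, 0, 0)"
  shows "Zc a b c < q ^ m1 * q ^ m2"
proof (cases "b = 0")
  case False
  have "q ^ (m2 - 1) < q ^ m2" using q_ge3 m2_pos by (intro power_strict_increasing) auto
  then show ?thesis using Z_bnz[OF a b False c] q_ge3 p_ge2 by simp
next
  case True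
  show ?thesis
  proof (cases "a = 0")
    case True
    then have "c \<noteq> 0" using nz \<open>b = 0\<close> by simp
    then show ?thesis using Z_00c True \<open>b = 0\<close> q_ge3 p_ge2 by simp
  next
    case False
    have t: "- c / a \<in> Fq" using a c by (intro GF_divide GF_uminus)
    have "Zc a b c = q ^ m2 * NQ (- c / a)" using Z_a0c[OF a False c] True by simp
    also have "\<dots> < q ^ m2 * q ^ m1" using NQ_lt[OF t] q_ge3 p_ge2 by simp
    finally show ?thesis by (simp add: mult.commute)
  qed
qed

lemma W0_pos: "W0 > 0"
proof -
  have "N * W0 = (p - 1) * p ^ (m - 1)"
    unfolding W0_def using N_dvd by (metis dvd_div_mult_self dvd_mult2 mult.commute)
  moreover have "(p - 1) * p ^ (m - 1) > 0" using p_ge2 by simp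
  ultimately show ?thesis by (metis mult_0_right neq0_conv)
qed

end


context ffmain begin

lemma m1GFp: "(-1::'f) \<in> GF p" using GF_uminus[OF GF_1, of 1] by simp

lemma X0: "(0::'f) \<in> X" using GF_0[of "m * m1"] X_eq by simp
lemma Y0: "(0::'f) \<in> Y" using GF_0[of "m * m2"] Y_eq by simp

lemma hweight_zero: "hweight P (\<lambda>_. 0::'f) = 0" unfolding hweight_def by simp

lemma inj_C: "inj_on (\<lambda>(a, b). cwC a b) (Fq \<times> Y)"
proof (rule inj_onI)
  fix u v assume u: "u \<in> Fq \<times> Y" and v: "v \<in> Fq \<times> Y" and e: "(\<lambda>(a, b). cwC a b) u = (\<lambda>(a, b). cwC a b) v"
  obtain a b where ab: "u = (a, b)" "a \<in> Fq" "b \<in> Y" using u by auto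
  obtain a' b' where ab': "v = (a', b')" "a' \<in> Fq" "b' \<in> Y" using v by auto
  have e': "cwC a b = cwC a' b'" using e ab ab' by simp
  have z: "cwC (a + (-1) * a') (b + (-1) * b') = (\<lambda>_. 0)"
  proof
    fix j
    have s1: "cwC (a + (-1) * a') (b + (-1) * b') j = cwC a b j + cwC ((-1) * a') ((-1) * b') j"
      by (rule cwC_add[symmetric])
    have s2: "cwC ((-1) * a') ((-1) * b') j = (-1) * cwC a' b' j" by (rule cwC_scal[OF m1GFp, symmetric])
    have "cwC (a + (-1) * a') (b + (-1) * b') j = cwC a b j + (-1) * cwC a' b' j" using s1 s2 by simp
    then show "cwC (a + (-1) * a') (b + (-1) * b') j = 0" using e' by simp
  qed
  have d1: "a + (-1) * a' \<in> Fq" using ab ab' by (auto intro: GF_diff)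
  have d2: "b + (-1) * b' \<in> Y" using ab ab' Y_eq by (auto intro: GF_diff)
  show "u = v"
  proof (rule ccontr)
    assume "u \<noteq> v"
    then have nz: "(a + (-1) * a', b + (-1) * b', 0::'f) \<noteq> (0, 0, 0)" using ab ab' by auto
    have "hweight (pos_C q m1 m2 N) (cwC (a + (-1) * a') (b + (-1) * b')) > 0"
      using hw_C[OF d1 d2] Zc_lt[OF d1 d2 GF_0 nz] W0_pos by simp
    then show False using z by (simp add: hweight_def)
  qed
qed

lemma inj_C': "inj_on (\<lambda>(a, b, c). cwC' a b c) (Fq \<times> Y \<times> Fq)"
proof (rule inj_onI)
  fix u v assume u: "u \<in> Fq \<times> Y \<times> Fq" and v: "v \<in> Fq \<times> Y \<times> Fq"
    and e: "(\<lambda>(a, b, c). cwC' a b c) u = (\<lambda>(a, b, c). cwC' a b c) v"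
  obtain a b c where ab: "u = (a, b, c)" "a \<in> Fq" "b \<in> Y" "c \<in> Fq" using u by auto
  obtain a' b' c' where ab': "v = (a', b', c')" "a' \<in> Fq" "b' \<in> Y" "c' \<in> Fq" using v by auto
  have e': "cwC' a b c = cwC' a' b' c'" using e ab ab' by simp
  have z: "cwC' (a + (-1) * a') (b + (-1) * b') (c + (-1) * c') = (\<lambda>_. 0)"
  proof
    fix j
    have s1: "cwC' (a + (-1) * a') (b + (-1) * b') (c + (-1) * c') j = cwC' a b c j + cwC' ((-1) * a') ((-1) * b') ((-1) * c') j"
      by (rule cwC'_add[symmetric])
    have s2: "cwC' ((-1) * a') ((-1) * b') ((-1) * c') j = (-1) * cwC' a' b' c' j" by (rule cwC'_scal[OF m1GFp, symmetric])
    have "cwC' (a + (-1) * a') (b + (-1) * b') (c + (-1) * c') j = cwC' a b c j + (-1) * cwC' a' b' c' j" using s1 s2 by simp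
    then show "cwC' (a + (-1) * a') (b + (-1) * b') (c + (-1) * c') j = 0" using e' by simp
  qed
  have d1: "a + (-1) * a' \<in> Fq" using ab ab' by (auto intro: GF_diff)
  have d2: "b + (-1) * b' \<in> Y" using ab ab' Y_eq by (auto intro: GF_diff)
  have d3: "c + (-1) * c' \<in> Fq" using ab ab' by (auto intro: GF_diff)
  show "u = v"
  proof (rule ccontr)
    assume "u \<noteq> v"
    then have nz: "(a + (-1) * a', b + (-1) * b', c + (-1) * c') \<noteq> (0, 0, 0)" using ab ab' by auto
    have "hweight (pos_C' q m1 m2 N) (cwC' (a + (-1) * a') (b + (-1) * b') (c + (-1) * c')) > 0"
      using hw_C'[OF d1 d2 d3] Zc_lt[OF d1 d2 d3 nz] W0_pos by simp
    then show False using z by (simp add: hweight_def)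
  qed
qed

lemma card_Fq_Y: "card (Fq \<times> Y) = p ^ (m * (m2 + 1))"
proof -
  have "p ^ (m * (m2 + 1)) = q * q ^ m2" by (simp only: power_mult power_Suc Suc_eq_plus1[symmetric])
  then show ?thesis using card_GFq card_Y by (simp add: card_cartesian_product)
qed

lemma card_Fq_Y_Fq: "card (Fq \<times> Y \<times> Fq) = p ^ (m * (m2 + 2))"
proof -
  have "p ^ (m * (m2 + 2)) = q * (q ^ m2 * q)"
    by (simp only: power_mult power_add power_one_right power2_eq_square mult.commute mult.left_commute)
  then show ?thesis using card_GFq card_Y by (simp add: card_cartesian_product)
qed

abbreviation PC :: "(('f \<times> 'f) \<times> nat) set" where "PC \<equiv> pos_C q m1 m2 N"
abbreviation PC' :: "(('f \<times> 'f) \<times> nat) set" where "PC' \<equiv> pos_C' q m1 m2 N"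

lemma lin_C: "linear_code p (PC) ((q ^ (m1 + m2) - 1) * (q - 1) div N) (m * (m2 + 1))
    (code_C p m q m1 m2 N \<theta> Q)"
  unfolding linear_code_def
proof (intro conjI)
  show fin: "finite (PC)" unfolding pos_C_def by simp
  have "card (PC) = (q ^ m1 * q ^ m2 - 1) * K"
    unfolding pos_C_def using card_XY X0 Y0 by (simp add: card_cartesian_product card_Diff_singleton)
  also have "\<dots> = (q ^ (m1 + m2) - 1) * (q - 1) div N"
    using div_mult_swap[OF N_dvd_q] by (simp add: power_add)
  finally show "card (PC) = (q ^ (m1 + m2) - 1) * (q - 1) div N" .
  show "code_C p m q m1 m2 N \<theta> Q \<subseteq> {c. (\<forall>j\<in>PC. c j \<in> GF p) \<and> (\<forall>j. j \<notin> PC \<longrightarrow> c j = 0)}"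
  proof
    fix w assume "w \<in> code_C p m q m1 m2 N \<theta> Q"
    then obtain a b where ab: "a \<in> Fq" "b \<in> Y" "w = cwC a b" unfolding code_C_eq by auto
    have "w j \<in> GF p" if j: "j \<in> PC" for j
    proof -
      obtain x y i where xyi: "j = ((x, y), i)" by (metis prod.collapse)
      have "x \<in> X" "y \<in> Y" using j xyi unfolding pos_C_def by auto
      then have "a * Q x + tr q m2 (b * y) \<in> Fq" using gam_in[OF ab(1) ab(2) GF_0] unfolding gam_def by simp
      then show ?thesis using j ab(3) xyi psi_GFp unfolding cwC_def by simp
    qed
    moreover have "w j = 0" if "j \<notin> PC" for j
      using that ab(3) unfolding cwC_def by (auto split: prod.splits)
    ultimately show "w \<in> {c. (\<forall>j\<in>PC. c j \<in> GF p) \<and> (\<forall>j. j \<notin> PC \<longrightarrow> c j = 0)}"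
      by blast
  qed
  show "(\<lambda>_. 0) \<in> code_C p m q m1 m2 N \<theta> Q"
    unfolding code_C_eq using cwC_zero Y0 by (auto intro!: image_eqI[of _ _ "(0, 0)"])
  show "\<forall>c\<in>code_C p m q m1 m2 N \<theta> Q. \<forall>d\<in>code_C p m q m1 m2 N \<theta> Q. (\<lambda>j. c j + d j) \<in> code_C p m q m1 m2 N \<theta> Q"
  proof (intro ballI)
    fix c d assume "c \<in> code_C p m q m1 m2 N \<theta> Q" "d \<in> code_C p m q m1 m2 N \<theta> Q"
    then obtain a b a' b' where ab: "a \<in> Fq" "b \<in> Y" "c = cwC a b" "a' \<in> Fq" "b' \<in> Y" "d = cwC a' b'"
      unfolding code_C_eq by auto
    have "(\<lambda>j. c j + d j) = cwC (a + a') (b + b')" using ab by (simp add: cwC_add)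
    moreover have "(a + a', b + b') \<in> Fq \<times> Y" using ab Y_eq by (auto intro: GF_add)
    ultimately show "(\<lambda>j. c j + d j) \<in> code_C p m q m1 m2 N \<theta> Q" unfolding code_C_eq by force
  qed
  show "\<forall>s\<in>(GF p :: 'f set). \<forall>c\<in>code_C p m q m1 m2 N \<theta> Q. (\<lambda>j. s * c j) \<in> code_C p m q m1 m2 N \<theta> Q"
  proof (intro ballI)
    fix s :: 'f and c assume s: "s \<in> GF p" and "c \<in> code_C p m q m1 m2 N \<theta> Q"
    then obtain a b where ab: "a \<in> Fq" "b \<in> Y" "c = cwC a b" unfolding code_C_eq by auto
    have "(\<lambda>j. s * c j) = cwC (s * a) (s * b)" using ab cwC_scal[OF s] by simp
    moreover have "(s * a, s * b) \<in> Fq \<times> Y" using ab GFp_Fq[OF s] Fq_sub_Y by (auto intro: GF_mult)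
    ultimately show "(\<lambda>j. s * c j) \<in> code_C p m q m1 m2 N \<theta> Q" unfolding code_C_eq by force
  qed
  show "card (code_C p m q m1 m2 N \<theta> Q) = p ^ (m * (m2 + 1))"
    unfolding code_C_eq using card_image[OF inj_C] card_Fq_Y by simp
qed

lemma lin_C': "linear_code p (PC') (q ^ (m1 + m2) * (q - 1) div N) (m * (m2 + 2))
    (code_C' p m q m1 m2 N \<theta> Q)"
  unfolding linear_code_def
proof (intro conjI)
  show fin: "finite (PC')" unfolding pos_C'_def by simp
  have "card (PC') = (q ^ m1 * q ^ m2) * K"
    unfolding pos_C'_def using card_XY by (simp add: card_cartesian_product)
  also have "\<dots> = q ^ (m1 + m2) * (q - 1) div N"
    using div_mult_swap[OF N_dvd_q] by (simp add: power_add)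
  finally show "card (PC') = q ^ (m1 + m2) * (q - 1) div N" .
  show "code_C' p m q m1 m2 N \<theta> Q \<subseteq> {c. (\<forall>j\<in>PC'. c j \<in> GF p) \<and> (\<forall>j. j \<notin> PC' \<longrightarrow> c j = 0)}"
  proof
    fix w assume "w \<in> code_C' p m q m1 m2 N \<theta> Q"
    then obtain a b c where ab: "a \<in> Fq" "b \<in> Y" "c \<in> Fq" "w = cwC' a b c" unfolding code_C'_eq by auto
    have "w j \<in> GF p" if j: "j \<in> PC'" for j
    proof -
      obtain x y i where xyi: "j = ((x, y), i)" by (metis prod.collapse)
      have "x \<in> X" "y \<in> Y" using j xyi unfolding pos_C'_def by auto
      then have "a * Q x + tr q m2 (b * y) + c \<in> Fq" using gam_in[OF ab(1) ab(2) ab(3)] unfolding gam_def by simp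
      then show ?thesis using j ab(4) xyi psi_GFp unfolding cwC'_def by simp
    qed
    moreover have "w j = 0" if "j \<notin> PC'" for j
      using that ab(4) unfolding cwC'_def by (auto split: prod.splits)
    ultimately show "w \<in> {c. (\<forall>j\<in>PC'. c j \<in> GF p) \<and> (\<forall>j. j \<notin> PC' \<longrightarrow> c j = 0)}"
      by blast
  qed
  show "(\<lambda>_. 0) \<in> code_C' p m q m1 m2 N \<theta> Q"
    unfolding code_C'_eq using cwC'_zero Y0 by (auto intro!: image_eqI[of _ _ "(0, 0, 0)"])
  show "\<forall>c\<in>code_C' p m q m1 m2 N \<theta> Q. \<forall>d\<in>code_C' p m q m1 m2 N \<theta> Q. (\<lambda>j. c j + d j) \<in> code_C' p m q m1 m2 N \<theta> Q"
  proof (intro ballI)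
    fix c d assume "c \<in> code_C' p m q m1 m2 N \<theta> Q" "d \<in> code_C' p m q m1 m2 N \<theta> Q"
    then obtain a b e a' b' e' where ab: "a \<in> Fq" "b \<in> Y" "e \<in> Fq" "c = cwC' a b e" "a' \<in> Fq" "b' \<in> Y" "e' \<in> Fq" "d = cwC' a' b' e'"
      unfolding code_C'_eq by auto
    have "(\<lambda>j. c j + d j) = cwC' (a + a') (b + b') (e + e')" using ab by (simp add: cwC'_add)
    moreover have "(a + a', b + b', e + e') \<in> Fq \<times> Y \<times> Fq" using ab Y_eq by (auto intro: GF_add)
    ultimately show "(\<lambda>j. c j + d j) \<in> code_C' p m q m1 m2 N \<theta> Q" unfolding code_C'_eq by force
  qed
  show "\<forall>s\<in>(GF p :: 'f set). \<forall>c\<in>code_C' p m q m1 m2 N \<theta> Q. (\<lambda>j. s * c j) \<in> code_C' p m q m1 m2 N \<theta> Q"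
  proof (intro ballI)
    fix s :: 'f and c assume s: "s \<in> GF p" and "c \<in> code_C' p m q m1 m2 N \<theta> Q"
    then obtain a b e where ab: "a \<in> Fq" "b \<in> Y" "e \<in> Fq" "c = cwC' a b e" unfolding code_C'_eq by auto
    have "(\<lambda>j. s * c j) = cwC' (s * a) (s * b) (s * e)" using ab cwC'_scal[OF s] by simp
    moreover have "(s * a, s * b, s * e) \<in> Fq \<times> Y \<times> Fq" using ab GFp_Fq[OF s] Fq_sub_Y by (auto intro: GF_mult)
    ultimately show "(\<lambda>j. s * c j) \<in> code_C' p m q m1 m2 N \<theta> Q" unfolding code_C'_eq by force
  qed
  show "card (code_C' p m q m1 m2 N \<theta> Q) = p ^ (m * (m2 + 2))"
    unfolding code_C'_eq using card_image[OF inj_C'] card_Fq_Y_Fq by simp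
qed

end


lemma zeta_even:
  fixes Rq NQ v e :: real
  assumes Rq: "Rq > 0" and r: "r = 2 * s" and h: "Rq * NQ = Rq ^ a * (Rq ^ r + v * Rq ^ s * e)"
  shows "Rq ^ m2 * NQ = (Rq ^ a * Rq ^ r * Rq ^ m2) * (1 + v * e / Rq ^ s) / Rq"
proof -
  have rs: "Rq ^ r = Rq ^ s * Rq ^ s" using r by (simp add: power_add[symmetric] mult_2)
  have n: "NQ = Rq ^ a * (Rq ^ r + v * Rq ^ s * e) / Rq" using h Rq by (simp add: field_simps)
  have ps: "Rq ^ s > 0" using Rq by simp
  show ?thesis unfolding n rs using Rq ps by (simp add: field_simps)
qed

lemma zeta_odd:
  fixes Rq NQ e :: real
  assumes Rq: "Rq > 0" and r: "r = 2 * s + 1" and h: "NQ = Rq ^ a * (Rq ^ (r - 1) + Rq ^ s * e)"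
  shows "Rq ^ m2 * NQ = (Rq ^ a * Rq ^ r * Rq ^ m2) * (1 + e / Rq ^ s) / Rq"
proof -
  have rs: "Rq ^ r = Rq * (Rq ^ s * Rq ^ s)" "Rq ^ (r - 1) = Rq ^ s * Rq ^ s"
    using r by (simp_all add: power_add[symmetric] mult_2)
  have ps: "Rq ^ s > 0" using Rq by simp
  show ?thesis using Rq ps unfolding h rs by (simp add: field_simps)
qed

context ffmain begin

lemma p_pos[simp]: "0 < p" using p_ge2 by simp

lemma W0_real: "real W0 = real (p - 1) * real q / (real p * real N)"
proof -
  have dv: "N dvd (p - 1) * p ^ (m - 1)" using N_dvd by (rule dvd_mult2)
  have NW: "N * W0 = (p - 1) * p ^ (m - 1)" unfolding W0_def using dv by (rule dvd_mult_div_cancel)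
  have qp: "q = p * p ^ (m - 1)" using m_pos by (cases m) auto
  have "real (N * W0) = real ((p - 1) * p ^ (m - 1))" using NW by (rule arg_cong)
  then have "real N * real W0 = real (p - 1) * real p ^ (m - 1)" by (simp only: of_nat_mult of_nat_power)
  moreover have "real q = real p * real p ^ (m - 1)" using qp by (simp only: of_nat_mult of_nat_power)
  ultimately have w: "real W0 = real (p - 1) * real p ^ (m - 1) / real N"
    and qq: "real q = real p * real p ^ (m - 1)" using N_pos by (simp_all add: field_simps)
  show ?thesis unfolding w qq using N_pos p_ge2 by (simp add: field_simps)
qed

lemma Zc_le: "Zc a b c \<le> q ^ m1 * q ^ m2"
proof -
  have "{(x, y). x \<in> X \<and> y \<in> Y \<and> gam a b c x y = 0} \<subseteq> X \<times> Y" by auto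
  from card_mono[OF finXY this] show ?thesis unfolding Zc_def card_XY .
qed

lemma wt_zeta:
  assumes a: "a \<in> Fq" and b: "b \<in> Y" and c: "c \<in> Fq"
    and Z: "real (Zc a b c) = (real q ^ m1 * real q ^ m2) * z / real q"
  shows "real (hweight PC' (cwC' a b c)) = real (p - 1) / (real p * real N) * real q ^ (m1 + m2) * (real q - z)"
proof -
  have "real (hweight PC' (cwC' a b c)) = real W0 * (real q ^ m1 * real q ^ m2 - real (Zc a b c))"
    using hw_C'[OF a b c] Zc_le[of a b c] by (simp add: of_nat_diff)
  also have "\<dots> = real (p - 1) / (real p * real N) * real q ^ (m1 + m2) * (real q - z)"
    unfolding W0_real Z using q_ge3 N_pos p_ge2 by (simp add: field_simps power_add)
  finally show ?thesis .
qed

lemma wt_zeta_C: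
  assumes a: "a \<in> Fq" and b: "b \<in> Y"
    and Z: "real (Zc a b 0) = (real q ^ m1 * real q ^ m2) * z / real q"
  shows "real (hweight PC (cwC a b)) = real (p - 1) / (real p * real N) * real q ^ (m1 + m2) * (real q - z)"
proof -
  have "real (hweight PC (cwC a b)) = real W0 * (real q ^ m1 * real q ^ m2 - real (Zc a b 0))"
    using hw_C[OF a b] Zc_le[of a b 0] by (simp add: of_nat_diff)
  also have "\<dots> = real (p - 1) / (real p * real N) * real q ^ (m1 + m2) * (real q - z)"
    unfolding W0_real Z using q_ge3 N_pos p_ge2 by (simp add: field_simps power_add)
  finally show ?thesis .
qed

lemma Zr_bnz:
  assumes a: "a \<in> Fq" and b: "b \<in> Y" "b \<noteq> 0" and c: "c \<in> Fq"
  shows "real (Zc a b c) = (real q ^ m1 * real q ^ m2) * 1 / real q"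
proof -
  have "real q ^ m2 = real q * real q ^ (m2 - 1)" using m2_pos by (cases m2) auto
  then show ?thesis using Z_bnz[OF a b c] q_ge3 by (simp add: field_simps)
qed

lemma Zr_000: "real (Zc 0 0 0) = (real q ^ m1 * real q ^ m2) * real q / real q"
  using Z_000 q_ge3 by simp

lemma Zr_00c: "c \<noteq> 0 \<Longrightarrow> real (Zc 0 0 c) = (real q ^ m1 * real q ^ m2) * 0 / real q"
  using Z_00c by simp

lemma m1_split: "real q ^ m1 = real q ^ (m1 - r) * real q ^ r"
  using r_le by (simp add: power_add[symmetric])

abbreviation etaE :: int where "etaE \<equiv> eta q ((-1) ^ (r div 2) * \<Delta>)"

lemma Zr_even:
  assumes ev: "even r" and a: "a \<in> Fq" "a \<noteq> 0" and c: "c \<in> Fq"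
  shows "real (Zc a 0 c) = (real q ^ m1 * real q ^ m2) * (1 + real_of_int (nu (- c / a)) * real_of_int etaE / real q ^ (r div 2)) / real q"
proof -
  have t: "- c / a \<in> Fq" using a c by (intro GF_divide GF_uminus)
  have h: "real q * real (NQ (- c / a)) = real q ^ (m1 - r) * (real q ^ r + real_of_int (nu (- c / a)) * real q ^ (r div 2) * real_of_int etaE)"
  proof -
    have "real_of_int (int q * int (NQ (- c / a))) = real_of_int (int q ^ (m1 - r) * (int q ^ r + nu (- c / a) * int q ^ (r div 2) * etaE))"
      using NQ_even[OF ev t] by simp
    then show ?thesis by simp
  qed
  have r2: "r = 2 * (r div 2)" using ev by simp
  have "real (Zc a 0 c) = real q ^ m2 * real (NQ (- c / a))" using Z_a0c[OF a c] by simp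
  also have "\<dots> = (real q ^ (m1 - r) * real q ^ r * real q ^ m2) * (1 + real_of_int (nu (- c / a)) * real_of_int etaE / real q ^ (r div 2)) / real q"
    by (rule zeta_even[OF _ r2 h]) (use q_ge3 in simp)
  finally show ?thesis unfolding m1_split .
qed

abbreviation etaO :: "'f \<Rightarrow> int" where "etaO t \<equiv> eta q ((-1) ^ ((r - 1) div 2) * \<Delta> * t)"

lemma Zr_odd:
  assumes od: "odd r" and a: "a \<in> Fq" "a \<noteq> 0" and c: "c \<in> Fq"
  shows "real (Zc a 0 c) = (real q ^ m1 * real q ^ m2) * (1 + real_of_int (etaO (- c / a)) / real q ^ ((r - 1) div 2)) / real q"
proof -
  have t: "- c / a \<in> Fq" using a c by (intro GF_divide GF_uminus)
  have h: "real (NQ (- c / a)) = real q ^ (m1 - r) * (real q ^ (r - 1) + real q ^ ((r - 1) div 2) * real_of_int (etaO (- c / a)))"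
  proof -
    have "real_of_int (int (NQ (- c / a))) = real_of_int (int q ^ (m1 - r) * (int q ^ (r - 1) + int q ^ ((r - 1) div 2) * etaO (- c / a)))"
      using NQ_odd[OF od t] by simp
    then show ?thesis by simp
  qed
  have r2: "r = 2 * ((r - 1) div 2) + 1" using od by presburger
  have "real (Zc a 0 c) = real q ^ m2 * real (NQ (- c / a))" using Z_a0c[OF a c] by simp
  also have "\<dots> = (real q ^ (m1 - r) * real q ^ r * real q ^ m2) * (1 + real_of_int (etaO (- c / a)) / real q ^ ((r - 1) div 2)) / real q"
    by (rule zeta_odd[OF _ r2 h]) (use q_ge3 in simp)
  finally show ?thesis unfolding m1_split .
qed

end


lemma parity_qm1:
  fixes p :: nat
  assumes "odd p"
  shows "even ((p ^ m - 1) div 2 + (p - 1) div 2 * m)"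
proof (induction m)
  case 0 then show ?case by simp
next
  case (Suc m)
  obtain h where h: "p = 2 * h + 1" using assms oddE by blast
  have "odd (p ^ m)" using assms by simp
  then obtain A where A: "p ^ m = 2 * A + 1" using oddE by blast
  have IH: "even (A + h * m)" using Suc.IH A h by simp
  have "p ^ Suc m - 1 = 2 * (p * A + h)" using A h by (simp add: algebra_simps)
  then have e: "(p ^ Suc m - 1) div 2 = p * A + h" by simp
  have eq: "p * A + h + h * Suc m = 2 * (h * A + h) + (A + h * m)" using h by (simp add: algebra_simps)
  have hd: "(p - 1) div 2 = h" using h by simp
  show ?case unfolding e hd eq using IH by simp
qed

lemma minus_one_pow_parity:
  "even (x + y) \<Longrightarrow> ((-1::int) ^ x) = (-1) ^ y"
  by (metis even_add minus_one_power_iff)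

context ffmain begin

lemma Delta_in: "\<Delta> \<in> Fq" using lam_ok by (intro GF_prod) auto

lemma Delta_nz: "\<Delta> \<noteq> 0" using lam_ok by simp

lemma eta_pow_m1: "eta q ((-1::'f) ^ j) = eta q (-1::'f) ^ j"
proof (induction j)
  case 0 then show ?case using eta_one by simp
next
  case (Suc j)
  have m1q: "(-1::'f) \<in> Fq" by (rule GF_uminus[OF GF_1])
  have "eta q ((-1::'f) * (-1) ^ j) = eta q (-1::'f) * eta q ((-1::'f) ^ j)"
    by (rule eta_mult[OF m1q GF_m1pow])
  then have "eta q ((-1::'f) ^ Suc j) = eta q (-1::'f) * eta q ((-1::'f) ^ j)" by (simp only: power_Suc)
  then show ?case using Suc by simp
qed

lemma etaE_eq:
  assumes "even r"
  shows "etaE = eta q \<Delta> * (-1) ^ ((p - 1) * m * r div 4)"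
proof -
  obtain s where s: "r = 2 * s" using assms by blast
  obtain h where h: "p - 1 = 2 * h" using p_odd p_ge2 by (metis odd_two_times_div_two_nat even_diff_nat odd_one dvd_def)
  have e0: "etaE = eta q ((-1::'f) ^ (r div 2)) * eta q \<Delta>"
    by (rule eta_mult[OF GF_m1pow Delta_in])
  have rs: "r div 2 = s" using s by simp
  have e1: "etaE = eta q ((-1::'f) ^ s) * eta q \<Delta>" using e0 unfolding rs .
  have e2: "eta q ((-1::'f) ^ s) = ((-1) ^ ((q - 1) div 2)) ^ s" using eta_pow_m1 eta_minus1 by simp
  have e3: "(p - 1) * m * r div 4 = h * m * s" using s h by simp
  have par: "even ((q - 1) div 2 + h * m)" using parity_qm1[OF p_odd, of m] h by simp
  have "((-1::int) ^ ((q - 1) div 2)) ^ s = ((-1) ^ (h * m)) ^ s"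
    using minus_one_pow_parity[OF par] by simp
  also have "\<dots> = (-1) ^ (h * m * s)" by (simp add: power_mult)
  finally show ?thesis using e1 e2 e3 by simp
qed

lemma eta_Delta_pm: "eta q \<Delta> = 1 \<or> eta q \<Delta> = -1"
  using eta_range[of \<Delta>] eta_nz[OF Delta_nz] by auto

lemma count_etaO:
  assumes a: "a \<in> Gs" and ep: "\<epsilon> = 1 \<or> \<epsilon> = -1"
  shows "card {c\<in>Gs. etaO (- c / a) = \<epsilon>} = (q - 1) div 2"
proof -
  define k where "k = - ((-1) ^ ((r - 1) div 2) * \<Delta>) / a"
  have aG: "a \<in> Fq" "a \<noteq> 0" using a Gs_def by auto
  have kG: "k \<in> Gs" unfolding k_def Gs_def using aG Delta_in Delta_nz
    by (auto intro!: GF_divide GF_uminus GF_mult GF_m1pow)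
  have ek: "etaO (- c / a) = eta q (k * c)" for c unfolding k_def by (simp add: algebra_simps)
  have im: "(\<lambda>c. k * c) ` {c\<in>Gs. eta q (k * c) = \<epsilon>} = {z\<in>Gs. eta q z = \<epsilon>}"
  proof (intro equalityI subsetI)
    fix z assume "z \<in> (\<lambda>c. k * c) ` {c\<in>Gs. eta q (k * c) = \<epsilon>}"
    then show "z \<in> {z\<in>Gs. eta q z = \<epsilon>}" using kG Gs_mult by auto
  next
    fix z assume z: "z \<in> {z\<in>Gs. eta q z = \<epsilon>}"
    have "z / k \<in> Gs" using z kG Gs_mult Gs_inv by (simp add: divide_inverse)
    moreover have "k * (z / k) = z" using kG Gs_def by auto
    ultimately show "z \<in> (\<lambda>c. k * c) ` {c\<in>Gs. eta q (k * c) = \<epsilon>}" using z by (metis (mono_tags, lifting) image_eqI mem_Collect_eq)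
  qed
  have "card {c\<in>Gs. etaO (- c / a) = \<epsilon>} = card {c\<in>Gs. eta q (k * c) = \<epsilon>}" unfolding ek ..
  also have "\<dots> = card ((\<lambda>c. k * c) ` {c\<in>Gs. eta q (k * c) = \<epsilon>})"
    by (rule card_image[symmetric]) (use kG Gs_def in \<open>auto simp: inj_on_def\<close>)
  also have "\<dots> = card {z\<in>Gs. eta q z = \<epsilon>}" unfolding im ..
  also have "\<dots> = (q - 1) div 2"
  proof -
    have eG: "eta q z = (if z \<in> Sq then 1 else -1)" if "z \<in> Gs" for z
      using eta_alt[of z] that unfolding Gs_def by simp
    have sq: "{z\<in>Gs. eta q z = 1} = Sq" using Sq_sub eG by (auto split: if_splits)
    have nsq: "{z\<in>Gs. eta q z = -1} = Gs - Sq" using Sq_sub eG by (auto split: if_splits)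
    have cs: "card Sq = (q - 1) div 2" using card_Sq by simp
    show ?thesis
    proof (cases "\<epsilon> = 1")
      case True then show ?thesis using sq cs by simp
    next
      case False
      then have "\<epsilon> = -1" using ep by simp
      moreover have "card (Gs - Sq) = (q - 1) div 2"
        using card_Sq card_Gs Sq_sub by (simp add: card_Diff_subset finite_subset[OF _ GF_finite] Gs_def)
      ultimately show ?thesis using nsq by simp
    qed
  qed
  finally show ?thesis .
qed

end


lemma ms_img_inj: "inj_on f D \<Longrightarrow> image_mset g (mset_set (f ` D)) = image_mset (\<lambda>d. g (f d)) (mset_set D)"
  by (simp add: image_mset_mset_set[symmetric] multiset.map_comp o_def)

lemma ms_const:
  assumes "\<And>x. x \<in> A \<Longrightarrow> g x = v"
  shows "image_mset g (mset_set A) = replicate_mset (card A) v"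
proof (cases "finite A")
  case True
  have "image_mset g (mset_set A) = image_mset (\<lambda>_. v) (mset_set A)"
    by (rule image_mset_cong) (use True assms in auto)
  also have "\<dots> = replicate_mset (card A) v" by (simp add: image_mset_const_eq)
  finally show ?thesis .
qed simp

lemma ms_union: "finite A \<Longrightarrow> finite B \<Longrightarrow> A \<inter> B = {} \<Longrightarrow>
  image_mset g (mset_set (A \<union> B)) = image_mset g (mset_set A) + image_mset g (mset_set B)"
  by (simp add: mset_set_Union)

lemma alg_e1:
  fixes P N T R e X :: real
  assumes "X > 0"
  shows "P / N * T * (R - (1 + (R - 1) * e / X)) = P * (R - 1) / N * T * (1 - e / X)"
  using assms by (simp add: field_simps)
lemma alg_e2:
  fixes P N T R e X :: real
  assumes "X > 0"
  shows "P / N * T * (R - (1 + (- 1) * e / X)) = P / N * T * (R - 1 + e / X)"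
  using assms by (simp add: field_simps)
lemma alg_o:
  fixes P N T R e X :: real
  assumes "X > 0"
  shows "P / N * T * (R - (1 + e / X)) = P / N * T * (R - 1 - e / X)"
  using assms by (simp add: field_simps)

context ffmain begin

definition epsv :: real where
  "epsv = real_of_int (eta (p ^ m) \<Delta>) *
     (if even r then (-1) ^ ((p - 1) * m * r div 4) else (-1) ^ ((p - 1) * m * (r + 1) div 4))"

lemma epsv_even: "even r \<Longrightarrow> epsv = real_of_int etaE"
  unfolding epsv_def using etaE_eq by simp

lemma epsv_pm: "epsv = 1 \<or> epsv = -1"
  unfolding epsv_def using eta_Delta_pm by (auto simp: minus_one_power_iff)

abbreviation "PN \<equiv> real p * real N"
abbreviation "P1 \<equiv> real (p - 1)"
abbreviation "Tq \<equiv> real q ^ (m1 + m2)"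

lemma rq1: "real (q - 1) = real q - 1" using q_ge3 by (simp add: of_nat_diff)

definition wC :: "'f \<times> 'f \<Rightarrow> real" where "wC d = real (hweight PC ((\<lambda>(a, b). cwC a b) d))"

lemma wdC: "weight_distr PC (code_C p m q m1 m2 N \<theta> Q) = image_mset wC (mset_set (Fq \<times> Y))"
  unfolding weight_distr_def code_C_eq wC_def by (rule ms_img_inj[OF inj_C])

lemma wC_0: "wC (0, 0) = 0"
  unfolding wC_def using cwC_zero by (simp add: hweight_def)

lemma wC_B1: "a \<in> Fq \<Longrightarrow> b \<in> Y \<Longrightarrow> b \<noteq> 0 \<Longrightarrow> wC (a, b) = P1 * real (q - 1) / PN * Tq"
proof -
  assume a: "a \<in> Fq" and b: "b \<in> Y" "b \<noteq> 0"
  have "wC (a, b) = P1 / PN * Tq * (real q - 1)"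
    unfolding wC_def using wt_zeta_C[OF a b(1) Zr_bnz[OF a b GF_0]] by simp
  then show ?thesis unfolding rq1 by simp
qed

lemma wC_B2_even: "even r \<Longrightarrow> a \<in> Fq \<Longrightarrow> a \<noteq> 0 \<Longrightarrow>
    wC (a, 0) = P1 * real (q - 1) / PN * Tq * (1 - epsv / real q ^ (r div 2))"
proof -
  assume ev: "even r" and a: "a \<in> Fq" "a \<noteq> 0"
  have Y0: "(0::'f) \<in> Y" by (rule Y0)
  have nu0: "real_of_int (nu (- 0 / a)) = real q - 1" by (simp add: nu_def)
  have "wC (a, 0) = P1 / PN * Tq * (real q - (1 + (real q - 1) * epsv / real q ^ (r div 2)))"
    unfolding wC_def using wt_zeta_C[OF a(1) Y0 Zr_even[OF ev a GF_0]] nu0 epsv_even[OF ev] by simp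
  also have "\<dots> = P1 * real (q - 1) / PN * Tq * (1 - epsv / real q ^ (r div 2))"
    unfolding rq1 by (rule alg_e1) (use q_ge3 in simp)
  finally show ?thesis .
qed

lemma wC_B2_odd: "odd r \<Longrightarrow> a \<in> Fq \<Longrightarrow> a \<noteq> 0 \<Longrightarrow> wC (a, 0) = P1 * real (q - 1) / PN * Tq"
proof -
  assume od: "odd r" and a: "a \<in> Fq" "a \<noteq> 0"
  have Y0: "(0::'f) \<in> Y" by (rule Y0)
  have "wC (a, 0) = P1 / PN * Tq * (real q - 1)"
    unfolding wC_def using wt_zeta_C[OF a(1) Y0 Zr_odd[OF od a GF_0]] by simp
  then show ?thesis unfolding rq1 by simp
qed

lemma card_Ynz: "card (Y - {0}) = q ^ m2 - 1" using card_Y Y0 by (simp add: card_Diff_singleton)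
lemma card_Fqnz: "card (Fq - {0}) = q - 1" using card_GFq by (simp add: card_Diff_singleton)

lemma wd_C_even:
  assumes ev: "even r"
  shows "weight_distr PC (code_C p m q m1 m2 N \<theta> Q) =
    {#0#} + replicate_mset (q * (q ^ m2 - 1)) (P1 * real (q - 1) / PN * Tq)
          + replicate_mset (q - 1) (P1 * real (q - 1) / PN * Tq * (1 - epsv / real q ^ (r div 2)))"
proof -
  let ?B1 = "Fq \<times> (Y - {0})"
  let ?B2 = "(Fq - {0}) \<times> {0::'f}"
  have D: "Fq \<times> Y = {(0, 0)} \<union> (?B1 \<union> ?B2)" using Y0 by auto
  have U1: "image_mset wC (mset_set (?B1 \<union> ?B2)) = image_mset wC (mset_set ?B1) + image_mset wC (mset_set ?B2)"
    by (rule ms_union) auto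
  have U2: "image_mset wC (mset_set ({(0, 0)} \<union> (?B1 \<union> ?B2))) = image_mset wC (mset_set {(0, 0)}) + image_mset wC (mset_set (?B1 \<union> ?B2))"
    by (rule ms_union) auto
  have "image_mset wC (mset_set (Fq \<times> Y)) = image_mset wC (mset_set {(0, 0)}) + (image_mset wC (mset_set ?B1) + image_mset wC (mset_set ?B2))"
    using D U1 U2 by simp
  also have "image_mset wC (mset_set {(0, 0)}) = {#0#}" using wC_0 by simp
  also have "image_mset wC (mset_set ?B1) = replicate_mset (q * (q ^ m2 - 1)) (P1 * real (q - 1) / PN * Tq)"
  proof -
    have "wC x = P1 * real (q - 1) / PN * Tq" if "x \<in> ?B1" for x
      using that wC_B1 by auto
    then show ?thesis using ms_const[of ?B1 wC] card_GFq card_Ynz by (simp add: card_cartesian_product)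
  qed
  also have "image_mset wC (mset_set ?B2) = replicate_mset (q - 1) (P1 * real (q - 1) / PN * Tq * (1 - epsv / real q ^ (r div 2)))"
  proof -
    have "wC x = P1 * real (q - 1) / PN * Tq * (1 - epsv / real q ^ (r div 2))" if "x \<in> ?B2" for x
      using that wC_B2_even[OF ev] by auto
    then show ?thesis using ms_const[of ?B2 wC] card_Fqnz by (simp add: card_cartesian_product)
  qed
  finally show ?thesis unfolding wdC by (simp add: add.assoc)
qed

lemma wd_C_odd:
  assumes od: "odd r"
  shows "weight_distr PC (code_C p m q m1 m2 N \<theta> Q) =
    {#0#} + replicate_mset (q ^ (m2 + 1) - 1) (P1 * real (q - 1) / PN * Tq)"
proof -
  let ?B = "Fq \<times> Y - {(0, 0)}"
  have D: "Fq \<times> Y = {(0, 0)} \<union> ?B" using Y0 by auto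
  have v: "wC d = P1 * real (q - 1) / PN * Tq" if "d \<in> ?B" for d
  proof -
    obtain a b where d: "d = (a, b)" by (cases d)
    have ab: "d = (a, b)" "a \<in> Fq" "b \<in> Y" "(a, b) \<noteq> (0, 0)" using that d by auto
    show ?thesis
    proof (cases "b = 0")
      case True
      then have "a \<noteq> 0" using ab by simp
      then show ?thesis using wC_B2_odd[OF od ab(2)] ab True by simp
    next
      case False then show ?thesis using wC_B1[OF ab(2) ab(3)] ab by simp
    qed
  qed
  have cB: "card ?B = q ^ (m2 + 1) - 1"
  proof -
    have "card ?B = card (Fq \<times> Y) - 1" using Y0 by (simp add: card_Diff_singleton)
    also have "card (Fq \<times> Y) = q ^ (m2 + 1)" using card_GFq card_Y by (simp add: card_cartesian_product)
    finally show ?thesis .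
  qed
  have U: "image_mset wC (mset_set ({(0, 0)} \<union> ?B)) = image_mset wC (mset_set {(0, 0)}) + image_mset wC (mset_set ?B)"
    by (rule ms_union) auto
  have "image_mset wC (mset_set (Fq \<times> Y)) = image_mset wC (mset_set {(0, 0)}) + image_mset wC (mset_set ?B)"
    using D U by simp
  also have "image_mset wC (mset_set {(0, 0)}) = {#0#}" using wC_0 by simp
  also have "image_mset wC (mset_set ?B) = replicate_mset (q ^ (m2 + 1) - 1) (P1 * real (q - 1) / PN * Tq)"
    using ms_const[of ?B wC, OF v] cB by simp
  finally show ?thesis unfolding wdC .
qed

end


context ffmain begin

definition wC' :: "'f \<times> 'f \<times> 'f \<Rightarrow> real" where "wC' d = real (hweight PC' ((\<lambda>(a, b, c). cwC' a b c) d))"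

lemma wdC': "weight_distr PC' (code_C' p m q m1 m2 N \<theta> Q) = image_mset wC' (mset_set (Fq \<times> Y \<times> Fq))"
  unfolding weight_distr_def code_C'_eq wC'_def by (rule ms_img_inj[OF inj_C'])

abbreviation "VA \<equiv> real (q - 1) * P1 / PN * Tq"

lemma wC'_0: "wC' (0, 0, 0) = 0"
  unfolding wC'_def using cwC'_zero by (simp add: hweight_def)

lemma wC'_S1: "a \<in> Fq \<Longrightarrow> b \<in> Y \<Longrightarrow> b \<noteq> 0 \<Longrightarrow> c \<in> Fq \<Longrightarrow> wC' (a, b, c) = VA"
proof -
  assume a: "a \<in> Fq" and b: "b \<in> Y" "b \<noteq> 0" and c: "c \<in> Fq"
  have "wC' (a, b, c) = P1 / PN * Tq * (real q - 1)"
    unfolding wC'_def using wt_zeta[OF a b(1) c Zr_bnz[OF a b c]] by simp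
  then show ?thesis unfolding rq1 by simp
qed

lemma wC'_S2: "c \<in> Fq \<Longrightarrow> c \<noteq> 0 \<Longrightarrow> wC' (0, 0, c) = P1 / PN * real q ^ (m1 + m2 + 1)"
proof -
  assume c: "c \<in> Fq" "c \<noteq> 0"
  have "wC' (0, 0, c) = P1 / PN * Tq * (real q - 0)"
    unfolding wC'_def using wt_zeta[OF GF_0 Y0 c(1) Zr_00c[OF c(2)]] by simp
  then show ?thesis by (simp add: power_add)
qed

lemma wC'_S3_even: "even r \<Longrightarrow> a \<in> Fq \<Longrightarrow> a \<noteq> 0 \<Longrightarrow>
    wC' (a, 0, 0) = real (q - 1) * P1 / PN * Tq * (1 - epsv / real q ^ (r div 2))"
proof -
  assume ev: "even r" and a: "a \<in> Fq" "a \<noteq> 0"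
  have nu0: "real_of_int (nu (- 0 / a)) = real q - 1" by (simp add: nu_def)
  have "wC' (a, 0, 0) = P1 / PN * Tq * (real q - (1 + (real q - 1) * epsv / real q ^ (r div 2)))"
    unfolding wC'_def using wt_zeta[OF a(1) Y0 GF_0 Zr_even[OF ev a GF_0]] nu0 epsv_even[OF ev] by simp
  also have "\<dots> = P1 * real (q - 1) / PN * Tq * (1 - epsv / real q ^ (r div 2))"
    unfolding rq1 by (rule alg_e1) (use q_ge3 in simp)
  finally show ?thesis by simp
qed

lemma wC'_S3_odd: "odd r \<Longrightarrow> a \<in> Fq \<Longrightarrow> a \<noteq> 0 \<Longrightarrow> wC' (a, 0, 0) = VA"
proof -
  assume od: "odd r" and a: "a \<in> Fq" "a \<noteq> 0"
  have "wC' (a, 0, 0) = P1 / PN * Tq * (real q - 1)"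
    unfolding wC'_def using wt_zeta[OF a(1) Y0 GF_0 Zr_odd[OF od a GF_0]] by simp
  then show ?thesis unfolding rq1 by simp
qed

lemma wC'_S4_even: "even r \<Longrightarrow> a \<in> Fq \<Longrightarrow> a \<noteq> 0 \<Longrightarrow> c \<in> Fq \<Longrightarrow> c \<noteq> 0 \<Longrightarrow>
    wC' (a, 0, c) = P1 / PN * Tq * (real q - 1 + epsv / real q ^ (r div 2))"
proof -
  assume ev: "even r" and a: "a \<in> Fq" "a \<noteq> 0" and c: "c \<in> Fq" "c \<noteq> 0"
  have "- c / a \<noteq> 0" using a c by simp
  then have nu1: "real_of_int (nu (- c / a)) = - 1" by (simp add: nu_def)
  have "wC' (a, 0, c) = P1 / PN * Tq * (real q - (1 + (- 1) * epsv / real q ^ (r div 2)))"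
    unfolding wC'_def using wt_zeta[OF a(1) Y0 c(1) Zr_even[OF ev a c(1)]] nu1 epsv_even[OF ev] by simp
  also have "\<dots> = P1 / PN * Tq * (real q - 1 + epsv / real q ^ (r div 2))"
    by (rule alg_e2) (use q_ge3 in simp)
  finally show ?thesis .
qed

lemma wC'_S4_odd: "odd r \<Longrightarrow> a \<in> Fq \<Longrightarrow> a \<noteq> 0 \<Longrightarrow> c \<in> Fq \<Longrightarrow>
    wC' (a, 0, c) = P1 / PN * Tq * (real q - 1 - real_of_int (etaO (- c / a)) / real q ^ ((r - 1) div 2))"
proof -
  assume od: "odd r" and a: "a \<in> Fq" "a \<noteq> 0" and c: "c \<in> Fq"
  have "wC' (a, 0, c) = P1 / PN * Tq * (real q - (1 + real_of_int (etaO (- c / a)) / real q ^ ((r - 1) div 2)))"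
    unfolding wC'_def using wt_zeta[OF a(1) Y0 c Zr_odd[OF od a c]] by simp
  also have "\<dots> = P1 / PN * Tq * (real q - 1 - real_of_int (etaO (- c / a)) / real q ^ ((r - 1) div 2))"
    by (rule alg_o) (use q_ge3 in simp)
  finally show ?thesis .
qed

lemma card_S4e:
  assumes ep: "\<epsilon> = 1 \<or> \<epsilon> = -1"
  shows "card {(a, b, c). a \<in> Fq - {0} \<and> b = (0::'f) \<and> c \<in> Fq - {0} \<and> etaO (- c / a) = \<epsilon>} = (q - 1) ^ 2 div 2"
proof -
  have e: "{(a, b, c). a \<in> Fq - {0} \<and> b = (0::'f) \<and> c \<in> Fq - {0} \<and> etaO (- c / a) = \<epsilon>}
      = (\<lambda>(a, c). (a, 0, c)) ` (SIGMA a:Gs. {c\<in>Gs. etaO (- c / a) = \<epsilon>})"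
    unfolding Gs_def by auto
  have "card ((\<lambda>(a, c). (a, 0::'f, c)) ` (SIGMA a:Gs. {c\<in>Gs. etaO (- c / a) = \<epsilon>}))
      = card (SIGMA a:Gs. {c\<in>Gs. etaO (- c / a) = \<epsilon>})"
    by (rule card_image) (auto simp: inj_on_def)
  also have "\<dots> = (\<Sum>a\<in>Gs. card {c\<in>Gs. etaO (- c / a) = \<epsilon>})"
    by (rule card_SigmaI) (auto simp: Gs_def)
  also have "\<dots> = (\<Sum>a\<in>Gs. (q - 1) div 2)" by (intro sum.cong refl count_etaO ep)
  also have "\<dots> = (q - 1) * ((q - 1) div 2)" using card_Gs by simp
  also have "\<dots> = (q - 1) ^ 2 div 2"
  proof -
    have "even (q - 1)" using odd_ppow[of m] q_ge3 by simp
    then show ?thesis by (simp add: power2_eq_square div_mult_swap)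
  qed
  finally show ?thesis unfolding e .
qed

lemma etaO_pm: "a \<in> Fq - {0} \<Longrightarrow> c \<in> Fq - {0} \<Longrightarrow> etaO (- c / a) = 1 \<or> etaO (- c / a) = -1"
proof -
  assume a: "a \<in> Fq - {0}" and c: "c \<in> Fq - {0}"
  have "(-1::'f) ^ ((r - 1) div 2) * \<Delta> * (- c / a) \<noteq> 0" using a c Delta_nz by simp
  then show ?thesis using eta_range[of "(-1::'f) ^ ((r - 1) div 2) * \<Delta> * (- c / a)"] eta_nz by auto
qed

lemma wd_C'_even:
  assumes ev: "even r"
  shows "weight_distr PC' (code_C' p m q m1 m2 N \<theta> Q) =
    {#0#} + replicate_mset (q - 1) (P1 / PN * real q ^ (m1 + m2 + 1))
          + replicate_mset (q ^ 2 * (q ^ m2 - 1)) VA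
          + replicate_mset (q - 1) (VA * (1 - epsv / real q ^ (r div 2)))
          + replicate_mset ((q - 1) ^ 2) (P1 / PN * Tq * (real q - 1 + epsv / real q ^ (r div 2)))"
proof -
  let ?Z = "{(0::'f, 0::'f, 0::'f)}"
  let ?S1 = "Fq \<times> (Y - {0}) \<times> Fq"
  let ?S2 = "{0::'f} \<times> {0::'f} \<times> (Fq - {0})"
  let ?S3 = "(Fq - {0}) \<times> {0::'f} \<times> {0::'f}"
  let ?S4 = "(Fq - {0}) \<times> {0::'f} \<times> (Fq - {0})"
  have D: "Fq \<times> Y \<times> Fq = ?Z \<union> (?S2 \<union> (?S1 \<union> (?S3 \<union> ?S4)))" using Y0 by auto
  have U1: "image_mset wC' (mset_set (?S3 \<union> ?S4)) = image_mset wC' (mset_set ?S3) + image_mset wC' (mset_set ?S4)"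
    by (rule ms_union) auto
  have U2: "image_mset wC' (mset_set (?S1 \<union> (?S3 \<union> ?S4))) = image_mset wC' (mset_set ?S1) + image_mset wC' (mset_set (?S3 \<union> ?S4))"
    by (rule ms_union) auto
  have U3: "image_mset wC' (mset_set (?S2 \<union> (?S1 \<union> (?S3 \<union> ?S4)))) = image_mset wC' (mset_set ?S2) + image_mset wC' (mset_set (?S1 \<union> (?S3 \<union> ?S4)))"
    by (rule ms_union) auto
  have U4: "image_mset wC' (mset_set (?Z \<union> (?S2 \<union> (?S1 \<union> (?S3 \<union> ?S4))))) = image_mset wC' (mset_set ?Z) + image_mset wC' (mset_set (?S2 \<union> (?S1 \<union> (?S3 \<union> ?S4))))"
    by (rule ms_union) auto
  have M0: "image_mset wC' (mset_set ?Z) = {#0#}" using wC'_0 by simp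
  have M1: "image_mset wC' (mset_set ?S1) = replicate_mset (q ^ 2 * (q ^ m2 - 1)) VA"
  proof -
    have "wC' x = VA" if "x \<in> ?S1" for x using that wC'_S1 by auto
    moreover have "card ?S1 = q ^ 2 * (q ^ m2 - 1)" using card_GFq card_Ynz by (simp add: card_cartesian_product power2_eq_square)
    ultimately show ?thesis using ms_const[of ?S1 wC'] by simp
  qed
  have M2: "image_mset wC' (mset_set ?S2) = replicate_mset (q - 1) (P1 / PN * real q ^ (m1 + m2 + 1))"
  proof -
    have "wC' x = P1 / PN * real q ^ (m1 + m2 + 1)" if "x \<in> ?S2" for x using that wC'_S2 by auto
    moreover have "card ?S2 = q - 1" using card_Fqnz by (simp add: card_cartesian_product)
    ultimately show ?thesis using ms_const[of ?S2 wC'] by simp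
  qed
  have M3: "image_mset wC' (mset_set ?S3) = replicate_mset (q - 1) (VA * (1 - epsv / real q ^ (r div 2)))"
  proof -
    have "wC' x = VA * (1 - epsv / real q ^ (r div 2))" if "x \<in> ?S3" for x using that wC'_S3_even[OF ev] by auto
    moreover have "card ?S3 = q - 1" using card_Fqnz by (simp add: card_cartesian_product)
    ultimately show ?thesis using ms_const[of ?S3 wC'] by simp
  qed
  have M4: "image_mset wC' (mset_set ?S4) = replicate_mset ((q - 1) ^ 2) (P1 / PN * Tq * (real q - 1 + epsv / real q ^ (r div 2)))"
  proof -
    have "wC' x = P1 / PN * Tq * (real q - 1 + epsv / real q ^ (r div 2))" if "x \<in> ?S4" for x
      using that wC'_S4_even[OF ev] by auto
    moreover have "card ?S4 = (q - 1) ^ 2" using card_Fqnz by (simp add: card_cartesian_product power2_eq_square)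
    ultimately show ?thesis using ms_const[of ?S4 wC'] by simp
  qed
  have "image_mset wC' (mset_set (Fq \<times> Y \<times> Fq)) =
      {#0#} + (replicate_mset (q - 1) (P1 / PN * real q ^ (m1 + m2 + 1))
          + (replicate_mset (q ^ 2 * (q ^ m2 - 1)) VA
          + (replicate_mset (q - 1) (VA * (1 - epsv / real q ^ (r div 2)))
          + replicate_mset ((q - 1) ^ 2) (P1 / PN * Tq * (real q - 1 + epsv / real q ^ (r div 2))))))"
    using D U1 U2 U3 U4 M0 M1 M2 M3 M4 by simp
  then show ?thesis unfolding wdC' by (simp add: add.assoc)
qed

lemma wd_C'_odd:
  assumes od: "odd r"
  shows "weight_distr PC' (code_C' p m q m1 m2 N \<theta> Q) =
    {#0#} + replicate_mset (q - 1) (P1 / PN * real q ^ (m1 + m2 + 1))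
          + replicate_mset (q ^ 2 * (q ^ m2 - 1) + q - 1) VA
          + replicate_mset ((q - 1) ^ 2 div 2) (P1 / PN * Tq * (real q - 1 - epsv / real q ^ ((r - 1) div 2)))
          + replicate_mset ((q - 1) ^ 2 div 2) (P1 / PN * Tq * (real q - 1 + epsv / real q ^ ((r - 1) div 2)))"
proof -
  let ?Z = "{(0::'f, 0::'f, 0::'f)}"
  let ?S13 = "Fq \<times> (Y - {0}) \<times> Fq \<union> (Fq - {0}) \<times> {0::'f} \<times> {0::'f}"
  let ?S2 = "{0::'f} \<times> {0::'f} \<times> (Fq - {0})"
  let ?Sp = "{(a, b, c). a \<in> Fq - {0} \<and> b = (0::'f) \<and> c \<in> Fq - {0} \<and> etaO (- c / a) = 1}"
  let ?Sm = "{(a, b, c). a \<in> Fq - {0} \<and> b = (0::'f) \<and> c \<in> Fq - {0} \<and> etaO (- c / a) = -1}"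
  let ?X = "real q ^ ((r - 1) div 2)"
  have D: "Fq \<times> Y \<times> Fq = ?Z \<union> (?S2 \<union> (?S13 \<union> (?Sp \<union> ?Sm)))"
  proof (intro equalityI subsetI)
    fix x assume x: "x \<in> Fq \<times> Y \<times> Fq"
    obtain a b c where abc: "x = (a, b, c)" by (cases x)
    show "x \<in> ?Z \<union> (?S2 \<union> (?S13 \<union> (?Sp \<union> ?Sm)))"
    proof (cases "a \<noteq> 0 \<and> b = 0 \<and> c \<noteq> 0")
      case True
      then have "etaO (- c / a) = 1 \<or> etaO (- c / a) = -1" using etaO_pm x abc by simp
      then show ?thesis using True x abc by auto
    next
      case False then show ?thesis using x abc by auto
    qed
  next
    fix x assume "x \<in> ?Z \<union> (?S2 \<union> (?S13 \<union> (?Sp \<union> ?Sm)))"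
    then show "x \<in> Fq \<times> Y \<times> Fq" using Y0 by auto
  qed
  have finSp: "finite ?Sp" by (rule finite_subset[of _ "Fq \<times> {0} \<times> Fq"]) auto
  have finSm: "finite ?Sm" by (rule finite_subset[of _ "Fq \<times> {0} \<times> Fq"]) auto
  have U1: "image_mset wC' (mset_set (?Sp \<union> ?Sm)) = image_mset wC' (mset_set ?Sp) + image_mset wC' (mset_set ?Sm)"
    by (rule ms_union[OF finSp finSm]) auto
  have U2: "image_mset wC' (mset_set (?S13 \<union> (?Sp \<union> ?Sm))) = image_mset wC' (mset_set ?S13) + image_mset wC' (mset_set (?Sp \<union> ?Sm))"
    by (rule ms_union) (use finSp finSm in auto)
  have U3: "image_mset wC' (mset_set (?S2 \<union> (?S13 \<union> (?Sp \<union> ?Sm)))) = image_mset wC' (mset_set ?S2) + image_mset wC' (mset_set (?S13 \<union> (?Sp \<union> ?Sm)))"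
    by (rule ms_union) (use finSp finSm in auto)
  have U4: "image_mset wC' (mset_set (?Z \<union> (?S2 \<union> (?S13 \<union> (?Sp \<union> ?Sm))))) = image_mset wC' (mset_set ?Z) + image_mset wC' (mset_set (?S2 \<union> (?S13 \<union> (?Sp \<union> ?Sm))))"
    by (rule ms_union) (use finSp finSm in auto)
  have M0: "image_mset wC' (mset_set ?Z) = {#0#}" using wC'_0 by simp
  have M2: "image_mset wC' (mset_set ?S2) = replicate_mset (q - 1) (P1 / PN * real q ^ (m1 + m2 + 1))"
  proof -
    have "wC' x = P1 / PN * real q ^ (m1 + m2 + 1)" if "x \<in> ?S2" for x using that wC'_S2 by auto
    moreover have "card ?S2 = q - 1" using card_Fqnz by (simp add: card_cartesian_product)
    ultimately show ?thesis using ms_const[of ?S2 wC'] by simp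
  qed
  have M13: "image_mset wC' (mset_set ?S13) = replicate_mset (q ^ 2 * (q ^ m2 - 1) + q - 1) VA"
  proof -
    have "wC' x = VA" if "x \<in> ?S13" for x using that wC'_S1 wC'_S3_odd[OF od] by auto
    moreover have "card ?S13 = q ^ 2 * (q ^ m2 - 1) + q - 1"
    proof -
      have "card ?S13 = card (Fq \<times> (Y - {0}) \<times> Fq) + card ((Fq - {0}) \<times> {0::'f} \<times> {0::'f})"
        by (rule card_Un_disjoint) auto
      also have "\<dots> = q ^ 2 * (q ^ m2 - 1) + (q - 1)"
        using card_GFq card_Ynz card_Fqnz by (simp add: card_cartesian_product power2_eq_square)
      finally show ?thesis using q_ge3 by simp
    qed
    ultimately show ?thesis using ms_const[of ?S13 wC'] by simp
  qed
  have Mp: "image_mset wC' (mset_set ?Sp) = replicate_mset ((q - 1) ^ 2 div 2) (P1 / PN * Tq * (real q - 1 - 1 / ?X))"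
  proof -
    have h: "wC' x = P1 / PN * Tq * (real q - 1 - 1 / ?X)" if "x \<in> ?Sp" for x
      using that wC'_S4_odd[OF od] by auto
    have "image_mset wC' (mset_set ?Sp) = replicate_mset (card ?Sp) (P1 / PN * Tq * (real q - 1 - 1 / ?X))"
      by (rule ms_const[OF h])
    then show ?thesis using card_S4e[of 1] by simp
  qed
  have Mm: "image_mset wC' (mset_set ?Sm) = replicate_mset ((q - 1) ^ 2 div 2) (P1 / PN * Tq * (real q - 1 + 1 / ?X))"
  proof -
    have h: "wC' x = P1 / PN * Tq * (real q - 1 + 1 / ?X)" if "x \<in> ?Sm" for x
      using that wC'_S4_odd[OF od] by auto
    have "image_mset wC' (mset_set ?Sm) = replicate_mset (card ?Sm) (P1 / PN * Tq * (real q - 1 + 1 / ?X))"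
      by (rule ms_const[OF h])
    then show ?thesis using card_S4e[of "-1"] by simp
  qed
  have "image_mset wC' (mset_set (Fq \<times> Y \<times> Fq)) =
      {#0#} + (replicate_mset (q - 1) (P1 / PN * real q ^ (m1 + m2 + 1))
          + (replicate_mset (q ^ 2 * (q ^ m2 - 1) + q - 1) VA
          + (replicate_mset ((q - 1) ^ 2 div 2) (P1 / PN * Tq * (real q - 1 - 1 / ?X))
          + replicate_mset ((q - 1) ^ 2 div 2) (P1 / PN * Tq * (real q - 1 + 1 / ?X)))))"
    using D U1 U2 U3 U4 M0 M2 M13 Mp Mm by simp
  then show ?thesis unfolding wdC' using epsv_pm by (auto simp: add.assoc add.commute add.left_commute)
qed

end


theorem proposition1:
  fixes p m m1 m2 L N r :: nat
    and Q :: "'f::{field,finite} \<Rightarrow> 'f" and \<theta> :: 'f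
    and e lam :: "nat \<Rightarrow> 'f"
  assumes p_prime: "prime p" and p_odd: "odd p"
    and m_pos: "m \<ge> 1" and m1_pos: "m1 \<ge> 1" and m2_pos: "m2 \<ge> 1"
    and field_card: "card (UNIV :: 'f set) = p ^ L"
    and m1_dvd: "m * m1 dvd L" and m2_dvd: "m * m2 dvd L"
    and N_pos: "N > 0" and N_dvd: "N dvd p - 1"
    and N_coprime: "coprime N ((p ^ m - 1) div (p - 1))"
    and theta_in: "\<theta> \<in> GF (p ^ m)"
    and theta_root: "\<theta> ^ ((p ^ m - 1) div N) = 1"
    and theta_prim: "\<forall>k. 0 < k \<and> k < (p ^ m - 1) div N \<longrightarrow> \<theta> ^ k \<noteq> 1"
    and Q_qf: "is_quadratic_form (p ^ m) m1 Q"
    and Q_nonzero: "\<exists>x\<in>GF ((p ^ m) ^ m1). Q x \<noteq> 0"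
    and r_def: "r = qf_rank (p ^ m) m1 Q"
    and Q_diag: "qf_diagonal (p ^ m) m1 Q e lam r"
  defines "q \<equiv> p ^ m"
    and "M \<equiv> m1 + m2"
    and "eps \<equiv> real_of_int (eta (p ^ m) (\<Prod>i<r. lam i)) *
               (if even r then (-1) ^ ((p - 1) * m * r div 4) else (-1) ^ ((p - 1) * m * (r + 1) div 4))"
  shows
    "linear_code p (pos_C q m1 m2 N) ((q ^ M - 1) * (q - 1) div N) (m * (m2 + 1))
        (code_C p m q m1 m2 N \<theta> Q) \<and>
     (even r \<longrightarrow>
        weight_distr (pos_C q m1 m2 N) (code_C p m q m1 m2 N \<theta> Q) =
          {#0#}
          + replicate_mset (q * (q ^ m2 - 1))
              (real (p - 1) * real (q - 1) / (real p * real N) * real q ^ M)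
          + replicate_mset (q - 1)
              (real (p - 1) * real (q - 1) / (real p * real N) * real q ^ M
                 * (1 - eps / real q ^ (r div 2)))) \<and>
     (odd r \<longrightarrow>
        weight_distr (pos_C q m1 m2 N) (code_C p m q m1 m2 N \<theta> Q) =
          {#0#}
          + replicate_mset (q ^ (m2 + 1) - 1)
              (real (p - 1) * real (q - 1) / (real p * real N) * real q ^ M)) \<and>
     linear_code p (pos_C' q m1 m2 N) (q ^ M * (q - 1) div N) (m * (m2 + 2))
        (code_C' p m q m1 m2 N \<theta> Q) \<and>
     (even r \<longrightarrow>
        weight_distr (pos_C' q m1 m2 N) (code_C' p m q m1 m2 N \<theta> Q) =
          {#0#}
          + replicate_mset (q - 1) (real (p - 1) / (real p * real N) * real q ^ (M + 1))
          + replicate_mset (q ^ 2 * (q ^ m2 - 1))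
              (real (q - 1) * real (p - 1) / (real p * real N) * real q ^ M)
          + replicate_mset (q - 1)
              (real (q - 1) * real (p - 1) / (real p * real N) * real q ^ M
                 * (1 - eps / real q ^ (r div 2)))
          + replicate_mset ((q - 1) ^ 2)
              (real (p - 1) / (real p * real N) * real q ^ M
                 * (real q - 1 + eps / real q ^ (r div 2)))) \<and>
     (odd r \<longrightarrow>
        weight_distr (pos_C' q m1 m2 N) (code_C' p m q m1 m2 N \<theta> Q) =
          {#0#}
          + replicate_mset (q - 1) (real (p - 1) / (real p * real N) * real q ^ (M + 1))
          + replicate_mset (q ^ 2 * (q ^ m2 - 1) + q - 1)
              (real (q - 1) * real (p - 1) / (real p * real N) * real q ^ M)
          + replicate_mset ((q - 1) ^ 2 div 2)
              (real (p - 1) / (real p * real N) * real q ^ M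
                 * (real q - 1 - eps / real q ^ ((r - 1) div 2)))
          + replicate_mset ((q - 1) ^ 2 div 2)
              (real (p - 1) / (real p * real N) * real q ^ M
                 * (real q - 1 + eps / real q ^ ((r - 1) div 2))))"
proof -
  have mL: "m dvd L" using m1_dvd dvd_mult_left by blast
  have r_le: "r \<le> m1" unfolding r_def qf_rank_def by simp
  interpret ffmain p L "TYPE('f)" m N \<theta> m1 m2 Q e lam r
    by unfold_locales (use p_prime p_odd field_card m_pos mL N_pos N_dvd N_coprime theta_in theta_root theta_prim
      m1_pos m2_pos m1_dvd m2_dvd Q_diag r_le Q_nonzero in auto)
  show ?thesis unfolding q_def M_def eps_def
    using lin_C lin_C' wd_C_even[unfolded epsv_def] wd_C_odd wd_C'_even[unfolded epsv_def]
      wd_C'_odd[unfolded epsv_def] by blast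
qed


end
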